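(* Let $n\ge0$ be an integer and let $\omega_1,\dots,\omega_r\in S^2$ ($r\ge1$) be pairwise different in the sense that $\omega_i\neq\pm\omega_j$ for $i\neq j$. Then $$\dim\operatorname{span}\{\dot P_n^{\omega_k}\mid k=1,\dots,r\}=\begin{cases}2r,& r\le n,\\ 2n+1,& r>n.\end{cases}$$
   Context: $\dot P_n$ denotes the real vector space of homogeneous harmonic polynomials of degree $n$ in the variables $x_1,x_2,x_3$ (real linear combinations of monomials $x_1^{r_1}x_2^{r_2}x_3^{r_3}$ with $r_1+r_2+r_3=n$, annihilated by the Laplacian). For $\omega\in S^2$, $\dot P_n^\omega\subset\dot P_n$ is the subspace of those polynomials that are $\omega$-axial, i.e. constant on every straight line $x_0+t\omega$ ($x_0\in\mathbb{R}^3$, $t\in\mathbb{R}$). The span is the real linear span of the union of the subspaces. *)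

theory Defs
  imports "HOL-Analysis.Analysis" "HOL-Library.Function_Algebras"
begin

definition fscale :: "real \<Rightarrow> (real^3 \<Rightarrow> real) \<Rightarrow> (real^3 \<Rightarrow> real)" where
  "fscale c f = (\<lambda>x. c * f x)"

definition fspan :: "(real^3 \<Rightarrow> real) set \<Rightarrow> (real^3 \<Rightarrow> real) set" where
  "fspan = Modules.module.span fscale"

definition fdim :: "(real^3 \<Rightarrow> real) set \<Rightarrow> nat" where
  "fdim = Vector_Spaces.vector_space.dim fscale"

definition degs :: "nat \<Rightarrow> (nat \<times> nat \<times> nat) set" where
  "degs n = {(a, b, d). a + b + d = n}"

definition hom_poly :: "nat \<Rightarrow> (real^3 \<Rightarrow> real) \<Rightarrow> bool" where
  "hom_poly n f \<longleftrightarrow> (\<exists>c :: nat \<times> nat \<times> nat \<Rightarrow> real.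
      f = (\<lambda>x. \<Sum>(a, b, d)\<in>degs n. c (a, b, d) * x$1 ^ a * x$2 ^ b * x$3 ^ d))"

definition laplacian :: "(real^3 \<Rightarrow> real) \<Rightarrow> real^3 \<Rightarrow> real" where
  "laplacian f x = (\<Sum>i\<in>UNIV. deriv (deriv (\<lambda>t. f (x + t *\<^sub>R axis i 1))) 0)"

definition harmonic_hom :: "nat \<Rightarrow> (real^3 \<Rightarrow> real) set" where
  "harmonic_hom n = {f. hom_poly n f \<and> (\<forall>x. laplacian f x = 0)}"

definition axial :: "real^3 \<Rightarrow> (real^3 \<Rightarrow> real) \<Rightarrow> bool" where
  "axial \<omega> f \<longleftrightarrow> (\<forall>x0 t. f (x0 + t *\<^sub>R \<omega>) = f x0)"

definition harmonic_axial :: "nat \<Rightarrow> real^3 \<Rightarrow> (real^3 \<Rightarrow> real) set" where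
  "harmonic_axial n \<omega> = {f \<in> harmonic_hom n. axial \<omega> f}"

end

theory Submission
  imports Defs "HOL-Computational_Algebra.Polynomial"
begin

lemma lin_pow_nz: "(a::complex) \<noteq> 0 \<or> b \<noteq> 0 \<Longrightarrow> [:b, a:] ^ N \<noteq> 0"
  by auto

lemma pderiv_lin_pow:
  "pderiv ([:b, a:] ^ N) = smult (of_nat N * a) ([:b, a:] ^ (N - 1))"
  by (simp add: pderiv_power pderiv_pCons)

lemma Dop_lin_pow:
  fixes a b am bm :: complex
  shows "[:bm, am:] * pderiv ([:b, a:] ^ N) - smult (of_nat N * am) ([:b, a:] ^ N)
     = smult (of_nat N * (a * bm - am * b)) ([:b, a:] ^ (N - 1))"
proof (cases N)
  case 0 then show ?thesis by simp
next
  case (Suc M)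
  have "[:b, a:] ^ N = [:b, a:] * [:b, a:] ^ M" using Suc by simp
  then show ?thesis
    unfolding pderiv_lin_pow using Suc
    by (simp add: algebra_simps smult_add_right  poly_eq_iff coeff_mult)
qed

lemma veronese:
  fixes \<alpha> \<beta> d :: "'i \<Rightarrow> complex"
  assumes "finite J" "card J \<le> N + 1" "\<forall>j\<in>J. \<alpha> j \<noteq> 0 \<or> \<beta> j \<noteq> 0"
    "\<forall>j\<in>J. \<forall>k\<in>J. j \<noteq> k \<longrightarrow> \<alpha> j * \<beta> k \<noteq> \<alpha> k * \<beta> j"
    "(\<Sum>j\<in>J. smult (d j) ([:\<beta> j, \<alpha> j:] ^ N)) = 0"
  shows "\<forall>j\<in>J. d j = 0"
  using assms
proof (induction J arbitrary: N d rule: finite_induct)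
  case empty then show ?case by simp
next
  case (insert m J)
  let ?l = "\<lambda>j. [:\<beta> j, \<alpha> j:]"
  show ?case
  proof (cases "J = {}")
    case True
    then have "smult (d m) (?l m ^ N) = 0" using insert.prems by simp
    moreover have "?l m ^ N \<noteq> 0" using insert.prems(2) by auto
    ultimately show ?thesis using True by auto
  next
    case False
    then have cJ: "card J \<ge> 1" using insert.hyps(1) by (simp add: Suc_leI card_gt_0_iff)
    have cJN: "card J \<le> (N - 1) + 1" using insert.prems(1) insert.hyps cJ by simp
    define D where "D p = ?l m * pderiv p - smult (of_nat N * \<alpha> m) p" for p
    have D0: "D 0 = 0" by (simp add: D_def)
    have Dadd: "D (p + q) = D p + D q" for p q
      unfolding D_def by (simp add: pderiv_add distrib_left smult_add_right)
    have Dsm: "D (smult c p) = smult c (D p)" for c p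
      unfolding D_def by (simp add: pderiv_smult smult_diff_right mult.commute smult_add_right)
    have Dlin: "D (\<Sum>j\<in>A. smult (c j) (q j)) = (\<Sum>j\<in>A. smult (c j) (D (q j)))" for A c q
      by (induction A rule: infinite_finite_induct) (auto simp: D0 Dadd Dsm)
    have Dl: "D (?l j ^ N) = smult (of_nat N * (\<alpha> j * \<beta> m - \<alpha> m * \<beta> j)) (?l j ^ (N - 1))" for j
      unfolding D_def by (rule Dop_lin_pow)
    have "D (\<Sum>j\<in>insert m J. smult (d j) (?l j ^ N)) = 0"
      using insert.prems(4) by (simp add: D_def)
    then have "(\<Sum>j\<in>insert m J. smult (d j) (D (?l j ^ N))) = 0" by (simp only: Dlin)
    then have "(\<Sum>j\<in>J. smult (d j) (D (?l j ^ N))) = 0"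
      using insert.hyps by (simp add: Dl)
    then have "(\<Sum>j\<in>J. smult (d j * (of_nat N * (\<alpha> j * \<beta> m - \<alpha> m * \<beta> j))) (?l j ^ (N - 1))) = 0"
      by (simp add: Dl)
    then have z: "\<forall>j\<in>J. d j * (of_nat N * (\<alpha> j * \<beta> m - \<alpha> m * \<beta> j)) = 0"
      using insert.IH[of "N - 1" "\<lambda>j. d j * (of_nat N * (\<alpha> j * \<beta> m - \<alpha> m * \<beta> j))"] cJN insert.prems(2,3)
      by auto
    have N0: "N \<noteq> 0" using insert.prems(1) insert.hyps cJ by auto
    have dJ: "\<forall>j\<in>J. d j = 0"
    proof
      fix j assume j: "j \<in> J"
      then have "j \<noteq> m" using insert.hyps by auto
      then have "\<alpha> j * \<beta> m - \<alpha> m * \<beta> j \<noteq> 0" using insert.prems(3) j by auto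
      then show "d j = 0" using z j N0 by auto
    qed
    then have "smult (d m) (?l m ^ N) = 0" using insert.prems(4) insert.hyps by simp
    moreover have "?l m ^ N \<noteq> 0" using insert.prems(2) by auto
    ultimately show ?thesis using dJ by auto
  qed
qed

definition lf :: "complex^3 \<Rightarrow> complex \<Rightarrow> complex \<Rightarrow> complex \<Rightarrow> complex" where
  "lf w z1 z2 z3 = w$1 * z1 + w$2 * z2 + w$3 * z3"

definition isnull :: "complex^3 \<Rightarrow> bool" where
  "isnull w \<longleftrightarrow> (w$1)^2 + (w$2)^2 + (w$3)^2 = 0"

definition cA :: "complex^3 \<Rightarrow> complex" where "cA w = w$1 + \<i> * w$2"
definition cB :: "complex^3 \<Rightarrow> complex" where "cB w = 2 * w$3"
definition cC :: "complex^3 \<Rightarrow> complex" where "cC w = \<i> * w$2 - w$1"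
definition al :: "complex^3 \<Rightarrow> complex" where "al w = csqrt (cC w)"
definition be :: "complex^3 \<Rightarrow> complex" where
  "be w = (if cC w = 0 then csqrt (cA w) else cB w / (2 * al w))"

lemma disc_id: "(cB w)^2 - 4 * cA w * cC w = 4 * ((w$1)^2 + (w$2)^2 + (w$3)^2)"
  unfolding cA_def cB_def cC_def
  by (simp add: power2_eq_square algebra_simps)

lemma disc0: "isnull w \<Longrightarrow> (cB w)^2 = 4 * cA w * cC w"
  using disc_id[of w] unfolding isnull_def by simp

lemma lf_param: "lf w (1 - \<mu>^2) (\<i> * (1 + \<mu>^2)) (2 * \<mu>) = cA w + cB w * \<mu> + cC w * \<mu>^2"
  unfolding lf_def cA_def cB_def cC_def by (simp add: algebra_simps)

lemma sq_param:
  assumes "isnull w"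
  shows "cA w + cB w * \<mu> + cC w * \<mu>^2 = (be w + al w * \<mu>)^2"
proof (cases "cC w = 0")
  case True
  then have "cB w = 0" using disc0[OF assms] by simp
  then show ?thesis using True by (simp add: be_def al_def)
next
  case False
  have a2: "(al w)^2 = cC w" by (simp add: al_def)
  then have a0: "al w \<noteq> 0" using False by auto
  have "(be w)^2 = cA w"
    using False a2 a0 disc0[OF assms] by (simp add: be_def power_divide field_simps)
  moreover have "2 * al w * be w = cB w" using False a0 by (simp add: be_def)
  ultimately show ?thesis using a2 by (simp add: power2_eq_square algebra_simps)
qed

lemma ab_nz:
  assumes "w \<noteq> 0" "isnull w"
  shows "al w \<noteq> 0 \<or> be w \<noteq> 0"
proof (rule ccontr)
  assume "\<not> ?thesis"
  then have a: "al w = 0" "be w = 0" by auto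
  then have c: "cC w = 0" by (metis al_def csqrt_eq_0)
  then have "cA w = 0" using a by (simp add: be_def)
  moreover have "cB w = 0" using c disc0[OF assms(2)] by simp
  ultimately have "w$1 = 0" "w$2 = 0" "w$3 = 0" using c unfolding cA_def cB_def cC_def
    by (auto simp: algebra_simps)
  then show False using assms by (metis vec_eq_iff exhaust_3 zero_index)
qed

lemma prop_lemma:
  assumes "isnull w" "isnull w'" "w' \<noteq> 0" "al w * be w' = al w' * be w"
  shows "\<exists>c. \<forall>i. w$i = c * w'$i"
proof -
  obtain \<kappa> where k: "al w = \<kappa> * al w'" "be w = \<kappa> * be w'"
  proof (cases "al w' = 0")
    case True
    then have "be w' \<noteq> 0" using ab_nz[OF assms(3,2)] by auto
    then show ?thesis using True assms(4)
      by (intro that[of "be w / be w'"]) auto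
  next
    case False
    then show ?thesis using assms(4)
      by (intro that[of "al w / al w'"]) (auto simp: field_simps)
  qed
  have eq: "cA w + cB w * \<mu> + cC w * \<mu>^2 = \<kappa>^2 * (cA w' + cB w' * \<mu> + cC w' * \<mu>^2)" for \<mu>
    unfolding sq_param[OF assms(1)] sq_param[OF assms(2)] k by (simp add: power2_eq_square algebra_simps)
  have eA: "cA w = \<kappa>^2 * cA w'" using eq[of 0] by simp
  have e1: "cA w + cB w + cC w = \<kappa>^2 * (cA w' + cB w' + cC w')" using eq[of 1] by simp
  have e2: "cA w - cB w + cC w = \<kappa>^2 * (cA w' - cB w' + cC w')" using eq[of "-1"] by simp
  have "2 * cB w = 2 * (\<kappa>^2 * cB w')"
  proof -
    have "2 * cB w = (cA w + cB w + cC w) - (cA w - cB w + cC w)" by simp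
    also have "\<dots> = \<kappa>^2 * (cA w' + cB w' + cC w') - \<kappa>^2 * (cA w' - cB w' + cC w')"
      using e1 e2 by simp
    also have "\<dots> = 2 * (\<kappa>^2 * cB w')" by (simp add: algebra_simps)
    finally show ?thesis .
  qed
  then have eB: "cB w = \<kappa>^2 * cB w'" by simp
  have eC: "cC w = \<kappa>^2 * cC w'" using e1 eA eB by (simp add: algebra_simps)
  have w1: "w$1 = (cA w - cC w) / 2" for w unfolding cA_def cC_def by simp
  have w2: "w$2 = (cA w + cC w) / (2 * \<i>)" for w unfolding cA_def cC_def by (simp add: field_simps)
  have w3: "w$3 = cB w / 2" for w unfolding cB_def by simp
  have "\<forall>i. w$i = \<kappa>^2 * w'$i"
  proof
    fix i :: 3
    show "w$i = \<kappa>^2 * w'$i"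
      using exhaust_3[of i] 
      by (metis (no_types, lifting) w1 w2 w3 eA eB eC right_diff_distrib distrib_left times_divide_eq_right)
  qed
  then show ?thesis by blast
qed

lemma cplx_step:
  fixes d a b :: "'i \<Rightarrow> complex"
  assumes "\<forall>r::real. (\<Sum>j\<in>J. d j * (a j * of_real r + b j)^n) = 0"
  shows "(\<Sum>j\<in>J. d j * (a j * t + b j)^n) = 0"
proof -
  define p where "p = (\<Sum>j\<in>J. smult (d j) ([:b j, a j:]^n))"
  have pp: "poly p z = (\<Sum>j\<in>J. d j * (a j * z + b j)^n)" for z
    unfolding p_def by (simp add: poly_sum algebra_simps)
  have "p = 0"
  proof (rule ccontr)
    assume "p \<noteq> 0"
    then have "finite {z. poly p z = 0}" by (rule poly_roots_finite)
    moreover have "range (of_real :: real \<Rightarrow> complex) \<subseteq> {z. poly p z = 0}"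
      using assms pp by auto
    moreover have "infinite (range (of_real :: real \<Rightarrow> complex))"
      using finite_imageD[of of_real "UNIV :: real set"] inj_of_real infinite_UNIV_char_0 by blast
    ultimately show False using finite_subset by blast
  qed
  then show ?thesis using pp[of t] by simp
qed

lemma complexify:
  fixes d :: "'i \<Rightarrow> complex"
  assumes "\<forall>x1 x2 x3::real. (\<Sum>j\<in>J. d j * (lf (w j) (of_real x1) (of_real x2) (of_real x3))^n) = 0"
  shows "(\<Sum>j\<in>J. d j * (lf (w j) z1 z2 z3)^n) = 0"
proof -
  have s1: "(\<Sum>j\<in>J. d j * (lf (w j) z1 (of_real x2) (of_real x3))^n) = 0" for x2 x3 :: real
    using cplx_step[where J=J and d=d and a="\<lambda>j. w j $ 1" and b="\<lambda>j. w j $ 2 * of_real x2 + w j $ 3 * of_real x3" and n=n and t=z1] assms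
    unfolding lf_def by (simp add: algebra_simps)
  have s2: "(\<Sum>j\<in>J. d j * (lf (w j) z1 z2 (of_real x3))^n) = 0" for x3 :: real
    using cplx_step[where J=J and d=d and a="\<lambda>j. w j $ 2" and b="\<lambda>j. w j $ 1 * z1 + w j $ 3 * of_real x3" and n=n and t=z2] s1
    unfolding lf_def by (simp add: algebra_simps)
  show ?thesis
    using cplx_step[where J=J and d=d and a="\<lambda>j. w j $ 3" and b="\<lambda>j. w j $ 1 * z1 + w j $ 2 * z2" and n=n and t=z3] s2
    unfolding lf_def by (simp add: algebra_simps)
qed

definition nonprop :: "complex^3 \<Rightarrow> complex^3 \<Rightarrow> bool" where
  "nonprop w w' \<longleftrightarrow> \<not> (\<exists>c. \<forall>i. w$i = c * w'$i)"

lemma null_veronese: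
  fixes d :: "'i \<Rightarrow> complex"
  assumes "finite J" "card J \<le> 2 * n + 1" "\<forall>j\<in>J. isnull (w j) \<and> w j \<noteq> 0"
    "\<forall>j\<in>J. \<forall>k\<in>J. j \<noteq> k \<longrightarrow> nonprop (w j) (w k)"
    "\<forall>x1 x2 x3::real. (\<Sum>j\<in>J. d j * (lf (w j) (of_real x1) (of_real x2) (of_real x3))^n) = 0"
  shows "\<forall>j\<in>J. d j = 0"
proof -
  have "poly (\<Sum>j\<in>J. smult (d j) ([:be (w j), al (w j):] ^ (2 * n))) \<mu> = 0" for \<mu>
  proof -
    have "(\<Sum>j\<in>J. d j * (lf (w j) (1 - \<mu>^2) (\<i> * (1 + \<mu>^2)) (2 * \<mu>))^n) = 0"
      by (rule complexify[OF assms(5)])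
    moreover have "lf (w j) (1 - \<mu>^2) (\<i> * (1 + \<mu>^2)) (2 * \<mu>) ^ n = (be (w j) + al (w j) * \<mu>) ^ (2 * n)"
      if "j \<in> J" for j
      using assms(3) that by (simp add: lf_param sq_param power_mult)
    ultimately show ?thesis
      by (simp add: poly_sum algebra_simps)
  qed
  then have "(\<Sum>j\<in>J. smult (d j) ([:be (w j), al (w j):] ^ (2 * n))) = 0"
    using poly_eq_poly_eq_iff[of _ 0] by (auto simp: fun_eq_iff)
  then show ?thesis
    using veronese[of J "2 * n" "\<lambda>j. al (w j)" "\<lambda>j. be (w j)" d] assms(1,2,3,4)
      ab_nz prop_lemma unfolding nonprop_def by (metis (no_types, lifting))
qed

lemma frame_exists:
  fixes \<omega> :: "real^3"
  assumes "norm \<omega> = 1"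
  shows "\<exists>u v. norm u = 1 \<and> norm v = 1 \<and> u \<bullet> v = 0 \<and> u \<bullet> \<omega> = 0 \<and> v \<bullet> \<omega> = 0 \<and>
           (\<forall>x. x = (x \<bullet> u) *\<^sub>R u + (x \<bullet> v) *\<^sub>R v + (x \<bullet> \<omega>) *\<^sub>R \<omega>)"
proof -
  obtain u0 :: "real^3" where u0: "u0 \<noteq> 0" "u0 \<bullet> \<omega> = 0"
  proof (cases "\<omega>$1 = 0 \<and> \<omega>$2 = 0")
    case True
    show ?thesis
      by (rule that[of "axis 1 1"]) (use True in \<open>auto simp: inner_axis' axis_eq_0_iff\<close>)
  next
    case False
    show ?thesis
    proof (rule that[of "vector [-(\<omega>$2), \<omega>$1, 0]"])
      show "vector [-(\<omega>$2), \<omega>$1, 0] \<noteq> (0::real^3)"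
      proof
        assume h: "vector [-(\<omega>$2), \<omega>$1, 0] = (0::real^3)"
        have "(vector [-(\<omega>$2), \<omega>$1, 0] :: real^3)$1 = 0" "(vector [-(\<omega>$2), \<omega>$1, 0] :: real^3)$2 = 0"
          by (simp_all add: h)
        then show False using False by (simp add: vector_3)
      qed
      show "vector [-(\<omega>$2), \<omega>$1, 0] \<bullet> \<omega> = 0"
        by (simp add: inner_vec_def sum_3 vector_3)
    qed
  qed
  define u where "u = (1 / norm u0) *\<^sub>R u0"
  have nu: "norm u = 1" using u0 by (simp add: u_def)
  have uw: "u \<bullet> \<omega> = 0" using u0 by (simp add: u_def)
  define v where "v = cross3 \<omega> u"
  have uv: "u \<bullet> v = 0" "v \<bullet> \<omega> = 0" unfolding v_def by (simp_all add: dot_cross_self)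
  have "(norm v)^2 + (\<omega> \<bullet> u)^2 = (norm \<omega> * norm u)^2" unfolding v_def by (rule norm_cross_dot)
  then have "(norm v)^2 = 1" using nu assms uw by (simp add: inner_commute)
  then have nv: "norm v = 1" using norm_ge_zero[of v] by (simp add: power2_eq_1_iff)
  have exp: "x = (x \<bullet> u) *\<^sub>R u + (x \<bullet> v) *\<^sub>R v + (x \<bullet> \<omega>) *\<^sub>R \<omega>" for x
  proof -
    define B where "B = {u, v, \<omega>}"
    have d: "u \<noteq> v" "u \<noteq> \<omega>" "v \<noteq> \<omega>"
      using uv uw nu nv assms by (auto simp: norm_eq_sqrt_inner)
    have po: "pairwise orthogonal B"
      unfolding B_def pairwise_def orthogonal_def using uv uw by (auto simp: inner_commute)
    have n1: "\<And>i. i \<in> B \<Longrightarrow> norm i = 1" unfolding B_def using nu nv assms by auto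
    have "0 \<notin> B" using n1 by force
    then have ind: "independent B" using po pairwise_orthogonal_independent by blast
    have cB: "card B = 3" unfolding B_def using d by auto
    have "UNIV \<subseteq> span B"
      by (rule card_ge_dim_independent) (use ind cB in auto)
    then have "(\<Sum>i\<in>B. (x \<bullet> i) *\<^sub>R i) = x"
      using orthonormal_basis_expand[OF po n1] unfolding B_def by auto
    then show ?thesis unfolding B_def using d by (simp add: add.assoc)
  qed
  show ?thesis using nu nv uv uw exp by blast
qed

definition cvec :: "real^3 \<Rightarrow> real^3 \<Rightarrow> complex^3" where
  "cvec u v = (\<chi> i. complex_of_real (u$i) + \<i> * complex_of_real (v$i))"

definition hz :: "real^3 \<Rightarrow> real^3 \<Rightarrow> real^3 \<Rightarrow> complex" where
  "hz u v x = complex_of_real (u \<bullet> x) + \<i> * complex_of_real (v \<bullet> x)"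

definition lfr :: "complex^3 \<Rightarrow> real^3 \<Rightarrow> complex" where
  "lfr w x = lf w (of_real (x$1)) (of_real (x$2)) (of_real (x$3))"

definition frm :: "real^3 \<Rightarrow> real^3 \<Rightarrow> real^3 \<Rightarrow> bool" where
  "frm \<omega> u v \<longleftrightarrow> norm \<omega> = 1 \<and> norm u = 1 \<and> norm v = 1 \<and> u \<bullet> v = 0 \<and> u \<bullet> \<omega> = 0 \<and> v \<bullet> \<omega> = 0 \<and>
     (\<forall>x. x = (x \<bullet> u) *\<^sub>R u + (x \<bullet> v) *\<^sub>R v + (x \<bullet> \<omega>) *\<^sub>R \<omega>)"

lemma lfr_cvec: "lfr (cvec u v) x = hz u v x"
  unfolding lfr_def lf_def cvec_def hz_def by (simp add: inner_vec_def sum_3 algebra_simps)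

lemma cnj_hz: "cnj (hz u v x) = hz u (-v) x"
  unfolding hz_def by simp

lemma inner_self_sum: "(x::real^3) \<bullet> y = x$1 * y$1 + x$2 * y$2 + x$3 * y$3"
  by (simp add: inner_vec_def sum_3)

lemma isnull_cvec:
  assumes "norm u = 1" "norm v = 1" "u \<bullet> v = 0"
  shows "isnull (cvec u v)"
proof -
  have e: "((cvec u v)$1)^2 + ((cvec u v)$2)^2 + ((cvec u v)$3)^2
     = of_real (u \<bullet> u) - of_real (v \<bullet> v) + 2 * \<i> * of_real (u \<bullet> v)"
    unfolding cvec_def inner_self_sum by (simp add: power2_eq_square algebra_simps)
  have "u \<bullet> u = 1" "v \<bullet> v = 1" using assms by (simp_all add: power2_norm_eq_inner[symmetric])
  then show ?thesis unfolding isnull_def e using assms by simp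
qed

lemma cvec_nz:
  assumes "norm u = 1"
  shows "cvec u v \<noteq> 0"
proof
  assume h: "cvec u v = 0"
  have "u$i = 0" for i
  proof -
    have "Re ((cvec u v)$i) = 0" using h by simp
    then show ?thesis by (simp add: cvec_def)
  qed
  then have "u = 0" by (simp add: vec_eq_iff)
  then show False using assms by simp
qed

lemma lfr_prop: "\<forall>i. w$i = c * w'$i \<Longrightarrow> lfr w x = c * lfr w' x"
  unfolding lfr_def lf_def by (simp add: algebra_simps)

lemma nonprop_conj:
  assumes "norm u = 1" "norm v = 1" "u \<bullet> v = 0"
  shows "nonprop (cvec u v) (cvec u (-v))" "nonprop (cvec u (-v)) (cvec u v)"
proof -
  have uu: "u \<bullet> u = 1" "v \<bullet> v = 1" using assms by (simp_all add: power2_norm_eq_inner[symmetric])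
  have vu: "v \<bullet> u = 0" using assms by (simp add: inner_commute)
  {
    fix s :: real assume s: "s = 1 \<or> s = -1"
    have "nonprop (cvec u (s *\<^sub>R v)) (cvec u (-(s *\<^sub>R v)))"
    proof (unfold nonprop_def, rule notI)
      assume "\<exists>c. \<forall>i. cvec u (s *\<^sub>R v) $ i = c * cvec u (-(s *\<^sub>R v)) $ i"
      then obtain c where c: "\<forall>i. cvec u (s *\<^sub>R v) $ i = c * cvec u (-(s *\<^sub>R v)) $ i" by blast
      have "hz u (s *\<^sub>R v) u = c * hz u (-(s *\<^sub>R v)) u"
        using lfr_prop[OF c] by (simp add: lfr_cvec)
      then have c1: "c = 1" using uu vu by (simp add: hz_def)
      have "hz u (s *\<^sub>R v) v = c * hz u (-(s *\<^sub>R v)) v"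
        using lfr_prop[OF c] by (simp add: lfr_cvec)
      then have "\<i> * of_real s = - (\<i> * of_real s)" using uu assms(3) c1 by (simp add: hz_def)
      then show False using s by auto
    qed
  }
  from this[of 1] this[of "-1"] show "nonprop (cvec u v) (cvec u (-v))" "nonprop (cvec u (-v)) (cvec u v)"
    by auto
qed

lemma nonprop_diff:
  assumes fj: "frm \<omega>j uj vj" and fk: "frm \<omega>k uk vk"
    and ne: "\<omega>k \<noteq> \<omega>j" "\<omega>k \<noteq> - \<omega>j"
    and sj: "vj' = vj \<or> vj' = - vj" and sk: "vk' = vk \<or> vk' = - vk"
  shows "nonprop (cvec uj vj') (cvec uk vk')"
proof (unfold nonprop_def, rule notI)
  assume "\<exists>c. \<forall>i. cvec uj vj' $ i = c * cvec uk vk' $ i"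
  then obtain c where c: "\<forall>i. cvec uj vj' $ i = c * cvec uk vk' $ i" by blast
  have "hz uj vj' \<omega>k = c * hz uk vk' \<omega>k"
    using lfr_prop[OF c] by (simp add: lfr_cvec)
  moreover have "hz uk vk' \<omega>k = 0" using fk sk unfolding frm_def hz_def by auto
  ultimately have "hz uj vj' \<omega>k = 0" by simp
  then have "Re (hz uj vj' \<omega>k) = 0" "Im (hz uj vj' \<omega>k) = 0" by simp_all
  then have "uj \<bullet> \<omega>k = 0" "vj' \<bullet> \<omega>k = 0" by (simp_all add: hz_def)
  then have o: "\<omega>k \<bullet> uj = 0" "\<omega>k \<bullet> vj = 0" using sj by (auto simp: inner_commute)
  have "\<omega>k = (\<omega>k \<bullet> \<omega>j) *\<^sub>R \<omega>j" using fj o unfolding frm_def by (metis add_0 scale_zero_left)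
  then have "norm \<omega>k = \<bar>\<omega>k \<bullet> \<omega>j\<bar> * norm \<omega>j" by (metis norm_scaleR)
  then have "\<bar>\<omega>k \<bullet> \<omega>j\<bar> = 1" using fj fk unfolding frm_def by simp
  then have "\<omega>k \<bullet> \<omega>j = 1 \<or> \<omega>k \<bullet> \<omega>j = -1" by auto
  then show False using \<open>\<omega>k = (\<omega>k \<bullet> \<omega>j) *\<^sub>R \<omega>j\<close> ne by auto
qed

definition good :: "(nat \<Rightarrow> real^3) \<Rightarrow> (nat \<Rightarrow> real^3) \<Rightarrow> (nat \<Rightarrow> real^3) \<Rightarrow> nat set \<Rightarrow> bool" where
  "good \<omega> u v K \<longleftrightarrow> (\<forall>k\<in>K. frm (\<omega> k) (u k) (v k)) \<and>
      (\<forall>j\<in>K. \<forall>k\<in>K. j \<noteq> k \<longrightarrow> \<omega> k \<noteq> \<omega> j \<and> \<omega> k \<noteq> - \<omega> j)"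

definition Wp :: "(nat \<Rightarrow> real^3) \<Rightarrow> (nat \<Rightarrow> real^3) \<Rightarrow> nat \<times> bool \<Rightarrow> complex^3" where
  "Wp u v p = cvec (u (fst p)) (if snd p then v (fst p) else - v (fst p))"

definition Dc :: "(nat \<Rightarrow> complex) \<Rightarrow> nat \<times> bool \<Rightarrow> complex" where
  "Dc c p = (if snd p then c (fst p) else cnj (c (fst p)))"

lemma W_good:
  assumes "good \<omega> u v K"
  shows "\<forall>p\<in>K \<times> UNIV. isnull (Wp u v p) \<and> Wp u v p \<noteq> 0"
    "\<forall>p\<in>K \<times> UNIV. \<forall>q\<in>K \<times> UNIV. p \<noteq> q \<longrightarrow> nonprop (Wp u v p) (Wp u v q)"
proof -
  show "\<forall>p\<in>K \<times> UNIV. isnull (Wp u v p) \<and> Wp u v p \<noteq> 0"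
  proof
    fix p assume "p \<in> K \<times> (UNIV :: bool set)"
    then have f: "frm (\<omega> (fst p)) (u (fst p)) (v (fst p))" using assms unfolding good_def by auto
    then show "isnull (Wp u v p) \<and> Wp u v p \<noteq> 0"
      unfolding Wp_def frm_def using isnull_cvec cvec_nz by auto
  qed
  show "\<forall>p\<in>K \<times> UNIV. \<forall>q\<in>K \<times> UNIV. p \<noteq> q \<longrightarrow> nonprop (Wp u v p) (Wp u v q)"
  proof (intro ballI impI)
    fix p q assume p: "p \<in> K \<times> (UNIV :: bool set)" and q: "q \<in> K \<times> (UNIV :: bool set)" and pq: "p \<noteq> q"
    obtain j b where pj: "p = (j, b)" by fastforce
    obtain k b' where qk: "q = (k, b')" by fastforce
    have fj: "frm (\<omega> j) (u j) (v j)" and fk: "frm (\<omega> k) (u k) (v k)"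
      using assms p q pj qk unfolding good_def by auto
    show "nonprop (Wp u v p) (Wp u v q)"
    proof (cases "j = k")
      case True
      then have "b \<noteq> b'" using pq pj qk by auto
      then show ?thesis using nonprop_conj[of "u k" "v k"] fk True pj qk unfolding Wp_def frm_def
        by (cases b) auto
    next
      case False
      then have "\<omega> k \<noteq> \<omega> j \<and> \<omega> k \<noteq> - \<omega> j" using assms p q pj qk unfolding good_def by auto
      then show ?thesis using nonprop_diff[OF fj fk] pj qk unfolding Wp_def by auto
    qed
  qed
qed

lemma re2c:
  "2 * complex_of_real (\<Sum>k\<in>K. Re (c k * hz (u k) (v k) x ^ n))
     = (\<Sum>p\<in>K \<times> UNIV. Dc c p * lfr (Wp u v p) x ^ n)"
proof -
  have "(\<Sum>p\<in>K \<times> UNIV. Dc c p * lfr (Wp u v p) x ^ n)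
      = (\<Sum>k\<in>K. \<Sum>b\<in>UNIV. Dc c (k, b) * lfr (Wp u v (k, b)) x ^ n)"
    by (simp add: sum.cartesian_product)
  also have "\<dots> = (\<Sum>k\<in>K. c k * hz (u k) (v k) x ^ n + cnj (c k * hz (u k) (v k) x ^ n))"
    by (simp add: UNIV_bool Dc_def Wp_def lfr_cvec cnj_hz add.commute)
  also have "\<dots> = (\<Sum>k\<in>K. 2 * complex_of_real (Re (c k * hz (u k) (v k) x ^ n)))"
    by (rule sum.cong[OF refl], subst complex_add_cnj) simp
  finally show ?thesis by (simp add: sum_distrib_left)
qed

lemma veronese_real_form:
  fixes E :: "nat \<times> bool \<Rightarrow> complex"
  assumes "finite J" "card J \<le> 2 * n + 1" "J \<subseteq> K \<times> UNIV" "good \<omega> u v K"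
    "\<forall>x. (\<Sum>p\<in>J. E p * lfr (Wp u v p) x ^ n) = 0"
  shows "\<forall>p\<in>J. E p = 0"
proof (rule null_veronese[where w = "Wp u v"])
  show "finite J" "card J \<le> 2 * n + 1" by fact+
  show "\<forall>j\<in>J. isnull (Wp u v j) \<and> Wp u v j \<noteq> 0" using W_good(1)[OF assms(4)] assms(3) by auto
  show "\<forall>j\<in>J. \<forall>k\<in>J. j \<noteq> k \<longrightarrow> nonprop (Wp u v j) (Wp u v k)"
    using W_good(2)[OF assms(4)] assms(3) by blast
  show "\<forall>x1 x2 x3::real. (\<Sum>j\<in>J. E j * lf (Wp u v j) (of_real x1) (of_real x2) (of_real x3) ^ n) = 0"
  proof (intro allI)
    fix x1 x2 x3 :: real
    show "(\<Sum>j\<in>J. E j * lf (Wp u v j) (of_real x1) (of_real x2) (of_real x3) ^ n) = 0"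
      using assms(5)[rule_format, of "vector [x1, x2, x3]"] by (simp add: lfr_def vector_3)
  qed
qed

lemma indep_small:
  assumes "finite K" "good \<omega> u v K" "card K \<le> n"
    "\<forall>x. (\<Sum>k\<in>K. Re (c k * hz (u k) (v k) x ^ n)) = 0"
  shows "\<forall>k\<in>K. c k = 0"
proof -
  have "\<forall>p\<in>K \<times> UNIV. Dc c p = 0"
  proof (rule veronese_real_form[where K = K and \<omega> = \<omega>])
    show "finite (K \<times> (UNIV :: bool set))" using assms(1) by simp
    show "card (K \<times> (UNIV :: bool set)) \<le> 2 * n + 1" using assms(3) by (simp add: card_cartesian_product)
    show "\<forall>x. (\<Sum>p\<in>K \<times> UNIV. Dc c p * lfr (Wp u v p) x ^ n) = 0"
      using assms(4) re2c[of c u v _ n K, symmetric] by simp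
  qed (use assms in auto)
  then show ?thesis unfolding Dc_def by (metis (full_types) SigmaI UNIV_I fst_conv snd_conv)
qed

lemma indep_extra:
  fixes a b :: real
  assumes "finite K" "m \<notin> K" "good \<omega> u v (insert m K)" "card K = n" "a \<noteq> 0" "b \<noteq> 0"
    and R1: "\<forall>x. (\<Sum>k\<in>K. Re (c k * hz (u k) (v k) x ^ n)) + Re (complex_of_real a * hz (u m) (v m) x ^ n) = 0"
    and R2: "\<forall>x. (\<Sum>k\<in>K. Re (c' k * hz (u k) (v k) x ^ n)) + Re (- \<i> * complex_of_real b * hz (u m) (v m) x ^ n) = 0"
  shows False
proof -
  define c1 where "c1 = c(m := complex_of_real a)"
  define c2 where "c2 = c'(m := - \<i> * complex_of_real b)"
  have s1: "(\<Sum>k\<in>insert m K. Re (c1 k * hz (u k) (v k) x ^ n)) = 0" for x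
  proof -
    have "(\<Sum>k\<in>K. Re (c1 k * hz (u k) (v k) x ^ n)) = (\<Sum>k\<in>K. Re (c k * hz (u k) (v k) x ^ n))"
      using assms(2) by (intro sum.cong) (auto simp: c1_def)
    then show ?thesis using R1 assms(1,2) by (simp add: c1_def add.commute)
  qed
  have s2: "(\<Sum>k\<in>insert m K. Re (c2 k * hz (u k) (v k) x ^ n)) = 0" for x
  proof -
    have "(\<Sum>k\<in>K. Re (c2 k * hz (u k) (v k) x ^ n)) = (\<Sum>k\<in>K. Re (c' k * hz (u k) (v k) x ^ n))"
      using assms(2) by (intro sum.cong) (auto simp: c2_def)
    then show ?thesis using R2 assms(1,2) by (simp add: c2_def add.commute)
  qed
  define I where "I = insert m K \<times> (UNIV :: bool set)"
  define E where "E p = c2 m * Dc c1 p - c1 m * Dc c2 p" for p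
  have t1: "(\<Sum>p\<in>I. Dc c1 p * lfr (Wp u v p) x ^ n) = 0" for x
    using re2c[of c1 u v x n "insert m K"] s1[of x] unfolding I_def by (metis mult_zero_right of_real_0)
  have t2: "(\<Sum>p\<in>I. Dc c2 p * lfr (Wp u v p) x ^ n) = 0" for x
    using re2c[of c2 u v x n "insert m K"] s2[of x] unfolding I_def by (metis mult_zero_right of_real_0)
  have tE: "(\<Sum>p\<in>I. E p * lfr (Wp u v p) x ^ n) = 0" for x
  proof -
    have "(\<Sum>p\<in>I. E p * lfr (Wp u v p) x ^ n)
        = c2 m * (\<Sum>p\<in>I. Dc c1 p * lfr (Wp u v p) x ^ n) - c1 m * (\<Sum>p\<in>I. Dc c2 p * lfr (Wp u v p) x ^ n)"
      unfolding E_def by (simp add: sum_distrib_left sum_subtractf algebra_simps)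
    then show ?thesis using t1 t2 by simp
  qed
  have Et: "E (m, True) = 0" unfolding E_def Dc_def c1_def c2_def by simp
  define J where "J = I - {(m, True)}"
  have finI: "finite I" using assms(1) unfolding I_def by simp
  have mI: "(m, True) \<in> I" unfolding I_def by simp
  have "(\<Sum>p\<in>J. E p * lfr (Wp u v p) x ^ n) = 0" for x
    using tE[of x] sum.remove[OF finI mI, of "\<lambda>p. E p * lfr (Wp u v p) x ^ n"] Et unfolding J_def by simp
  moreover have "card I = 2 * n + 2" unfolding I_def using assms(1,2,4) by (simp add: card_cartesian_product)
  then have "card J = 2 * n + 1" unfolding J_def using mI finI by simp
  ultimately have "\<forall>p\<in>J. E p = 0"
    using veronese_real_form[of J n "insert m K" \<omega> u v E] finI assms(3) unfolding J_def I_def by auto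
  moreover have "(m, False) \<in> J" unfolding J_def I_def by simp
  ultimately have "E (m, False) = 0" by blast
  moreover have "E (m, False) = - 2 * \<i> * complex_of_real (a * b)"
    unfolding E_def Dc_def c1_def c2_def by (simp add: algebra_simps)
  ultimately show False using assms(5,6) by simp
qed

lemma pderiv_sum: "pderiv (\<Sum>i\<in>A. f i) = (\<Sum>i\<in>A. pderiv (f i))"
  by (induction A rule: infinite_finite_induct) (auto simp: pderiv_add)

lemma d2_poly:
  fixes q :: "real poly"
  assumes "\<forall>t. F t = poly q t"
  shows "deriv (deriv F) 0 = poly (pderiv (pderiv q)) 0"
proof -
  have F: "F = poly q" using assms by auto
  have "deriv (poly p) = poly (pderiv p)" for p :: "real poly"
    by (rule ext, rule DERIV_imp_deriv, rule poly_DERIV)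
  then show ?thesis unfolding F by simp
qed

lemma D2_prod:
  fixes s p s' q :: "'a::idom"
  shows "poly (pderiv (pderiv ([:s, p:] ^ a * [:s', q:] ^ b))) 0 =
     of_nat (a * (a - 1)) * s ^ (a - 2) * p^2 * s' ^ b
   + 2 * of_nat (a * b) * s ^ (a - 1) * s' ^ (b - 1) * p * q
   + of_nat (b * (b - 1)) * s ^ a * s' ^ (b - 2) * q^2"
proof -
  have pd: "pderiv ([:x, y:] ^ k) = smult (of_nat k * y) ([:x, y:] ^ (k - 1))" for x y :: 'a and k
    by (simp add: pderiv_power pderiv_pCons)
  have pdd: "pderiv (pderiv ([:x, y:] ^ k)) = smult (of_nat (k * (k - 1)) * y^2) ([:x, y:] ^ (k - 2))" for x y :: 'a and k
  proof -
    have "pderiv (pderiv ([:x, y:] ^ k)) = smult (of_nat k * y) (smult (of_nat (k - 1) * y) ([:x, y:] ^ (k - 1 - 1)))"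
      by (simp only: pd pderiv_smult)
    moreover have "of_nat k * y * (of_nat (k - 1) * y) = of_nat (k * (k - 1)) * y^2"
      by (simp only: of_nat_mult power2_eq_square mult_ac)
    moreover have "k - 1 - 1 = k - 2" by simp
    ultimately show ?thesis by (metis smult_smult)
  qed
  have e: "pderiv (pderiv (A * B)) = A * pderiv (pderiv B) + pderiv A * pderiv B + pderiv A * pderiv B + pderiv (pderiv A) * B"
    for A B :: "'a poly"
    by (simp add: pderiv_mult pderiv_add algebra_simps)
  have v0: "poly ([:x, y:] ^ k) 0 = x ^ k" for x y :: 'a and k by (simp add: poly_power)
  have v1: "poly (pderiv ([:x, y:] ^ k)) 0 = of_nat k * y * x ^ (k - 1)" for x y :: 'a and k
    by (simp add: pd poly_power)
  have v2: "poly (pderiv (pderiv ([:x, y:] ^ k))) 0 = of_nat (k * (k - 1)) * y^2 * x ^ (k - 2)" for x y :: 'a and k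
    by (simp only: pdd poly_smult v0)
  show ?thesis
    unfolding e poly_add poly_mult v0 v1 v2 of_nat_mult
    by (simp add: algebra_simps power2_eq_square)
qed

lemma Re_poly: "Re (poly p (complex_of_real t)) = poly (map_poly Re p) t"
  by (induction p) (auto simp: map_poly_pCons)

lemma pderiv_map_Re: "pderiv (map_poly Re p) = map_poly Re (pderiv p)"
  by (rule poly_eqI) (simp add: coeff_pderiv coeff_map_poly)

lemma d2_Gf:
  "deriv (deriv (\<lambda>t. Re (c * (\<alpha> + complex_of_real t * \<beta>) ^ n))) 0
     = Re (c * of_nat (n * (n - 1)) * \<beta>^2 * \<alpha> ^ (n - 2))"
proof -
  define p where "p = smult c ([:\<alpha>, \<beta>:] ^ n)"
  have h: "\<forall>t. Re (c * (\<alpha> + complex_of_real t * \<beta>) ^ n) = poly (map_poly Re p) t"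
    by (simp only: Re_poly[symmetric]) (simp add: p_def algebra_simps)
  have "deriv (deriv (\<lambda>t. Re (c * (\<alpha> + complex_of_real t * \<beta>) ^ n))) 0
      = poly (pderiv (pderiv (map_poly Re p))) 0"
    by (rule d2_poly[OF h])
  also have "\<dots> = poly (map_poly Re (pderiv (pderiv p))) 0"
    by (simp add: pderiv_map_Re)
  also have "\<dots> = Re (poly (pderiv (pderiv p)) 0)"
    using Re_poly[of "pderiv (pderiv p)" 0] by simp
  also have "poly (pderiv (pderiv p)) 0 = c * poly (pderiv (pderiv ([:\<alpha>, \<beta>:] ^ n))) 0"
    unfolding p_def by (simp add: pderiv_smult)
  also have "poly (pderiv (pderiv ([:\<alpha>, \<beta>:] ^ n))) 0 = of_nat (n * (n - 1)) * \<beta>^2 * \<alpha> ^ (n - 2)"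
    using D2_prod[of \<alpha> \<beta> n 1 0 0] by simp
  finally show ?thesis by (simp add: mult.assoc)
qed

definition mon :: "nat \<times> nat \<times> nat \<Rightarrow> real^3 \<Rightarrow> real" where
  "mon \<alpha> x = (case \<alpha> of (a, b, d) \<Rightarrow> x$1 ^ a * x$2 ^ b * x$3 ^ d)"

lemma finite_degs: "finite (degs n)"
proof -
  have "degs n \<subseteq> {..n} \<times> {..n} \<times> {..n}" unfolding degs_def by auto
  then show ?thesis by (rule finite_subset) auto
qed

lemma hom_poly_iff: "hom_poly n f \<longleftrightarrow> (\<exists>c. f = (\<lambda>x. \<Sum>\<alpha>\<in>degs n. c \<alpha> * mon \<alpha> x))"
proof -
  have "(\<Sum>(a, b, d)\<in>degs n. c (a, b, d) * x$1 ^ a * x$2 ^ b * x$3 ^ d) = (\<Sum>\<alpha>\<in>degs n. c \<alpha> * mon \<alpha> x)" for c x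
    by (rule sum.cong) (auto simp: mon_def)
  then show ?thesis unfolding hom_poly_def by simp
qed

lemma hom_poly_I:
  assumes "A \<subseteq> degs n" "\<forall>x. f x = (\<Sum>\<alpha>\<in>A. c \<alpha> * mon \<alpha> x)"
  shows "hom_poly n f"
proof -
  have "f x = (\<Sum>\<alpha>\<in>degs n. (if \<alpha> \<in> A then c \<alpha> else 0) * mon \<alpha> x)" for x
    using assms finite_degs by (simp add: sum.mono_neutral_cong_right if_distrib)
  then show ?thesis unfolding hom_poly_iff
    by (intro exI[of _ "\<lambda>\<alpha>. if \<alpha> \<in> A then c \<alpha> else 0"]) (simp add: fun_eq_iff)
qed

lemma hom_poly_const: "hom_poly 0 (\<lambda>x. k)"
  by (rule hom_poly_I[of "{(0,0,0)}" _ _ "\<lambda>_. k"]) (auto simp: degs_def mon_def)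

lemma hom_poly_add:
  assumes "hom_poly n f" "hom_poly n g"
  shows "hom_poly n (\<lambda>x. f x + g x)"
proof -
  obtain c e where "f = (\<lambda>x. \<Sum>\<alpha>\<in>degs n. c \<alpha> * mon \<alpha> x)" "g = (\<lambda>x. \<Sum>\<alpha>\<in>degs n. e \<alpha> * mon \<alpha> x)"
    using assms unfolding hom_poly_iff by blast
  then have "(\<lambda>x. f x + g x) = (\<lambda>x. \<Sum>\<alpha>\<in>degs n. (c \<alpha> + e \<alpha>) * mon \<alpha> x)"
    by (simp add: sum.distrib algebra_simps)
  then show ?thesis unfolding hom_poly_iff by (intro exI[of _ "\<lambda>\<alpha>. c \<alpha> + e \<alpha>"]) simp
qed

lemma hom_poly_scale:
  assumes "hom_poly n f"
  shows "hom_poly n (\<lambda>x. k * f x)"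
proof -
  obtain c where "f = (\<lambda>x. \<Sum>\<alpha>\<in>degs n. c \<alpha> * mon \<alpha> x)"
    using assms unfolding hom_poly_iff by blast
  then have "(\<lambda>x. k * f x) = (\<lambda>x. \<Sum>\<alpha>\<in>degs n. (k * c \<alpha>) * mon \<alpha> x)"
    by (simp add: sum_distrib_left algebra_simps)
  then show ?thesis unfolding hom_poly_iff by (intro exI[of _ "\<lambda>\<alpha>. k * c \<alpha>"]) simp
qed

definition sh :: "3 \<Rightarrow> nat \<times> nat \<times> nat \<Rightarrow> nat \<times> nat \<times> nat" where
  "sh i \<alpha> = (case \<alpha> of (a, b, d) \<Rightarrow> if i = 1 then (a + 1, b, d) else if i = 2 then (a, b + 1, d) else (a, b, d + 1))"

definition unsh :: "3 \<Rightarrow> nat \<times> nat \<times> nat \<Rightarrow> nat \<times> nat \<times> nat" where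
  "unsh i \<alpha> = (case \<alpha> of (a, b, d) \<Rightarrow> if i = 1 then (a - 1, b, d) else if i = 2 then (a, b - 1, d) else (a, b, d - 1))"

lemma unsh_sh: "unsh i (sh i \<alpha>) = \<alpha>"
  by (cases \<alpha>) (auto simp: sh_def unsh_def)

lemma sh_degs: "\<alpha> \<in> degs n \<Longrightarrow> sh i \<alpha> \<in> degs (Suc n)"
  by (cases \<alpha>) (auto simp: sh_def degs_def)

lemma mon_sh: "mon (sh i \<alpha>) x = x$i * mon \<alpha> x"
  using exhaust_3[of i] by (cases \<alpha>) (auto simp: sh_def mon_def)

lemma hom_poly_coord:
  assumes "hom_poly n f"
  shows "hom_poly (Suc n) (\<lambda>x. x$i * f x)"
proof -
  obtain c where f: "f = (\<lambda>x. \<Sum>\<alpha>\<in>degs n. c \<alpha> * mon \<alpha> x)"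
    using assms unfolding hom_poly_iff by blast
  have inj: "inj_on (sh i) (degs n)" by (metis inj_on_inverseI unsh_sh)
  show ?thesis
  proof (rule hom_poly_I[where A = "sh i ` degs n" and c = "\<lambda>\<beta>. c (unsh i \<beta>)"])
    show "sh i ` degs n \<subseteq> degs (Suc n)" using sh_degs by auto
    show "\<forall>x. x $ i * f x = (\<Sum>\<alpha>\<in>sh i ` degs n. c (unsh i \<alpha>) * mon \<alpha> x)"
      unfolding f by (simp add: sum.reindex[OF inj] unsh_sh mon_sh sum_distrib_left algebra_simps)
  qed
qed

lemma hom_poly_lin:
  assumes "hom_poly n f"
  shows "hom_poly (Suc n) (\<lambda>x. (w \<bullet> x) * f x)"
proof -
  have e: "(\<lambda>x. (w \<bullet> x) * f x) = (\<lambda>x. (w$1 * (x$1 * f x) + w$2 * (x$2 * f x)) + w$3 * (x$3 * f x))"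
    by (auto simp: inner_vec_def sum_3 algebra_simps)
  show ?thesis unfolding e
    by (intro hom_poly_add hom_poly_scale hom_poly_coord assms)
qed

definition Gf :: "nat \<Rightarrow> real^3 \<Rightarrow> real^3 \<Rightarrow> complex \<Rightarrow> real^3 \<Rightarrow> real" where
  "Gf n u v c x = Re (c * hz u v x ^ n)"

lemma hom_poly_Gf: "hom_poly n (Gf n u v c) \<and> hom_poly n (\<lambda>x. Im (c * hz u v x ^ n))"
proof (induction n)
  case 0
  then show ?case unfolding Gf_def by (simp add: hom_poly_const)
next
  case (Suc n)
  have e1: "Gf (Suc n) u v c = (\<lambda>x. (u \<bullet> x) * Gf n u v c x + (-1) * ((v \<bullet> x) * Im (c * hz u v x ^ n)))"
    by (auto simp: Gf_def hz_def algebra_simps)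
  have e2: "(\<lambda>x. Im (c * hz u v x ^ Suc n)) = (\<lambda>x. (v \<bullet> x) * Gf n u v c x + (u \<bullet> x) * Im (c * hz u v x ^ n))"
    by (auto simp: Gf_def hz_def algebra_simps)
  show ?case unfolding e1 e2 using Suc
    by (intro conjI hom_poly_add hom_poly_scale hom_poly_lin) auto
qed

lemma hz_shift: "hz u v (x + t *\<^sub>R y) = hz u v x + complex_of_real t * (complex_of_real (u \<bullet> y) + \<i> * complex_of_real (v \<bullet> y))"
  unfolding hz_def by (simp add: inner_add_right algebra_simps)

lemma laplacian_Gf:
  assumes "norm u = 1" "norm v = 1" "u \<bullet> v = 0"
  shows "laplacian (Gf n u v c) x = 0"
proof -
  define \<beta> where "\<beta> i = complex_of_real (u$i) + \<i> * complex_of_real (v$i)" for i :: 3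
  have d: "deriv (deriv (\<lambda>t. Gf n u v c (x + t *\<^sub>R axis i 1))) 0
      = Re (c * of_nat (n * (n - 1)) * (\<beta> i)^2 * (hz u v x) ^ (n - 2))" for i
  proof -
    have e: "(\<lambda>t. Gf n u v c (x + t *\<^sub>R axis i 1)) = (\<lambda>t. Re (c * (hz u v x + complex_of_real t * \<beta> i) ^ n))"
      by (auto simp: Gf_def hz_shift \<beta>_def inner_axis)
    show ?thesis unfolding e by (rule d2_Gf)
  qed
  have uu: "u \<bullet> u = 1" "v \<bullet> v = 1" using assms by (simp_all add: power2_norm_eq_inner[symmetric])
  have "(\<beta> 1)^2 + (\<beta> 2)^2 + (\<beta> 3)^2 = of_real (u \<bullet> u) - of_real (v \<bullet> v) + 2 * \<i> * of_real (u \<bullet> v)"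
    unfolding \<beta>_def inner_self_sum by (simp add: power2_eq_square algebra_simps)
  then have s0: "(\<beta> 1)^2 + (\<beta> 2)^2 + (\<beta> 3)^2 = 0" using uu assms(3) by simp
  define K where "K = c * of_nat (n * (n - 1))"
  define h where "h = (hz u v x) ^ (n - 2)"
  have "Re (K * (\<beta> 1)^2 * h) + Re (K * (\<beta> 2)^2 * h) + Re (K * (\<beta> 3)^2 * h)
      = Re (K * h * ((\<beta> 1)^2 + (\<beta> 2)^2 + (\<beta> 3)^2))"
    by (simp only: plus_complex.sel(1)[symmetric]) (simp add: algebra_simps)
  then show ?thesis
    unfolding laplacian_def sum_3 d K_def[symmetric] h_def[symmetric] using s0 by simp
qed

lemma axial_Gf:
  assumes "u \<bullet> \<omega> = 0" "v \<bullet> \<omega> = 0"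
  shows "axial \<omega> (Gf n u v c)"
  unfolding axial_def Gf_def using assms by (simp add: hz_shift inner_commute)

lemma Gf_in:
  assumes "frm \<omega> u v"
  shows "Gf n u v c \<in> harmonic_axial n \<omega>"
  using assms hom_poly_Gf laplacian_Gf axial_Gf
  unfolding harmonic_axial_def harmonic_hom_def frm_def by auto

definition hom2 :: "nat \<Rightarrow> (real \<Rightarrow> real \<Rightarrow> real) \<Rightarrow> bool" where
  "hom2 n g \<longleftrightarrow> (\<exists>\<gamma>. \<forall>s t. g s t = (\<Sum>m\<le>n. \<gamma> m * s ^ m * t ^ (n - m)))"

lemma hom2_const: "hom2 0 (\<lambda>s t. k)"
  unfolding hom2_def by (intro exI[of _ "\<lambda>_. k"]) simp

lemma hom2_add': 
  assumes "hom2 n f" "hom2 n g" shows "hom2 n (\<lambda>s t. f s t + g s t)"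
proof -
  obtain a b where a: "\<forall>s t. f s t = (\<Sum>m\<le>n. a m * s ^ m * t ^ (n - m))"
    and b: "\<forall>s t. g s t = (\<Sum>m\<le>n. b m * s ^ m * t ^ (n - m))"
    using assms unfolding hom2_def by blast
  show ?thesis unfolding hom2_def
    by (rule exI[of _ "\<lambda>m. a m + b m"]) (simp add: a b sum.distrib algebra_simps)
qed

lemma hom2_scale:
  assumes "hom2 n f" shows "hom2 n (\<lambda>s t. k * f s t)"
proof -
  obtain a where a: "\<forall>s t. f s t = (\<Sum>m\<le>n. a m * s ^ m * t ^ (n - m))"
    using assms unfolding hom2_def by blast
  show ?thesis unfolding hom2_def
    by (rule exI[of _ "\<lambda>m. k * a m"]) (simp add: a sum_distrib_left algebra_simps)
qed

lemma hom2_lin: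
  assumes "hom2 n f" shows "hom2 (Suc n) (\<lambda>s t. (p * s + q * t) * f s t)"
proof -
  obtain a where a: "\<forall>s t. f s t = (\<Sum>m\<le>n. a m * s ^ m * t ^ (n - m))"
    using assms unfolding hom2_def by blast
  define g where "g k = (if k \<ge> 1 then p * a (k - 1) else 0) + (if k \<le> n then q * a k else 0)" for k
  have "(p * s + q * t) * f s t = (\<Sum>k\<le>Suc n. g k * s ^ k * t ^ (Suc n - k))" for s t
  proof -
    have e1: "(\<Sum>k\<le>Suc n. (if k \<ge> 1 then p * a (k - 1) else 0) * s ^ k * t ^ (Suc n - k))
        = (\<Sum>m\<le>n. p * s * (a m * s ^ m * t ^ (n - m)))"
      by (subst sum.atMost_Suc_shift) (simp add: algebra_simps)
    have e2: "(\<Sum>k\<le>Suc n. (if k \<le> n then q * a k else 0) * s ^ k * t ^ (Suc n - k))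
        = (\<Sum>m\<le>n. q * t * (a m * s ^ m * t ^ (n - m)))"
      by (simp add: Suc_diff_le algebra_simps)
    have "(\<Sum>k\<le>Suc n. g k * s ^ k * t ^ (Suc n - k))
       = (\<Sum>k\<le>Suc n. (if k \<ge> 1 then p * a (k - 1) else 0) * s ^ k * t ^ (Suc n - k))
       + (\<Sum>k\<le>Suc n. (if k \<le> n then q * a k else 0) * s ^ k * t ^ (Suc n - k))"
      unfolding g_def by (simp add: sum.distrib algebra_simps)
    also have "\<dots> = (p * s + q * t) * f s t"
      unfolding e1 e2 a[rule_format] by (simp add: sum_distrib_left sum.distrib algebra_simps)
    finally show ?thesis by simp
  qed
  then show ?thesis unfolding hom2_def by blast
qed

lemma hom2_pow:
  assumes "hom2 n f" shows "hom2 (k + n) (\<lambda>s t. (p * s + q * t) ^ k * f s t)"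
proof (induction k)
  case 0 then show ?case using assms by simp
next
  case (Suc k)
  have "hom2 (Suc (k + n)) (\<lambda>s t. (p * s + q * t) * ((p * s + q * t) ^ k * f s t))"
    by (rule hom2_lin[OF Suc])
  then show ?case by (simp add: algebra_simps)
qed

lemma hom2_sum:
  assumes "finite A" "\<forall>\<alpha>\<in>A. hom2 n (g \<alpha>)"
  shows "hom2 n (\<lambda>s t. \<Sum>\<alpha>\<in>A. g \<alpha> s t)"
  using assms
proof (induction A rule: finite_induct)
  case empty
  show ?case unfolding hom2_def by (intro exI[of _ "\<lambda>_. 0"]) simp
next
  case (insert x F)
  then show ?case by (simp add: hom2_add')
qed

lemma hom_poly_hom2:
  assumes "hom_poly n f"
  shows "hom2 n (\<lambda>s t. f (s *\<^sub>R u + t *\<^sub>R v))"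
proof -
  obtain c where f: "f = (\<lambda>x. \<Sum>\<alpha>\<in>degs n. c \<alpha> * mon \<alpha> x)"
    using assms unfolding hom_poly_iff by blast
  have m: "hom2 n (\<lambda>s t. mon \<alpha> (s *\<^sub>R u + t *\<^sub>R v))" if "\<alpha> \<in> degs n" for \<alpha>
  proof -
    obtain a b d where \<alpha>: "\<alpha> = (a, b, d)" by (cases \<alpha>)
    then have n: "n = a + (b + (d + 0))" using that by (simp add: degs_def)
    have "hom2 (a + (b + (d + 0))) (\<lambda>s t. (u$1 * s + v$1 * t) ^ a * ((u$2 * s + v$2 * t) ^ b * ((u$3 * s + v$3 * t) ^ d * 1)))"
      by (intro hom2_pow hom2_const)
    then show ?thesis unfolding n \<alpha> mon_def by (simp add: algebra_simps)
  qed
  show ?thesis unfolding f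
    by (intro hom2_sum finite_degs ballI hom2_scale m)
qed

lemma axial_rep:
  assumes "frm \<omega> u v" "f \<in> harmonic_axial n \<omega>"
  shows "\<exists>\<gamma>. \<forall>x. f x = (\<Sum>m\<le>n. \<gamma> m * (u \<bullet> x) ^ m * (v \<bullet> x) ^ (n - m))"
proof -
  have hp: "hom_poly n f" and ax: "axial \<omega> f"
    using assms(2) unfolding harmonic_axial_def harmonic_hom_def by auto
  obtain \<gamma> where g: "\<forall>s t. f (s *\<^sub>R u + t *\<^sub>R v) = (\<Sum>m\<le>n. \<gamma> m * s ^ m * t ^ (n - m))"
    using hom_poly_hom2[OF hp, of u v] unfolding hom2_def by blast
  have "f x = (\<Sum>m\<le>n. \<gamma> m * (u \<bullet> x) ^ m * (v \<bullet> x) ^ (n - m))" for x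
  proof -
    have "x = ((x \<bullet> u) *\<^sub>R u + (x \<bullet> v) *\<^sub>R v) + (x \<bullet> \<omega>) *\<^sub>R \<omega>"
      using assms(1) unfolding frm_def by metis
    then have "f x = f ((x \<bullet> u) *\<^sub>R u + (x \<bullet> v) *\<^sub>R v)"
      using ax unfolding axial_def by metis
    then show ?thesis using g by (simp add: inner_commute)
  qed
  then show ?thesis by blast
qed

lemma unit_sums:
  fixes u v :: "real^3"
  assumes "norm u = 1" "norm v = 1" "u \<bullet> v = 0"
  shows "(u$1)^2 + (u$2)^2 + (u$3)^2 = 1" "(v$1)^2 + (v$2)^2 + (v$3)^2 = 1"
    "u$1 * v$1 + u$2 * v$2 + u$3 * v$3 = 0"
proof -
  have "u \<bullet> u = 1" "v \<bullet> v = 1" using assms by (simp_all add: power2_norm_eq_inner[symmetric])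
  then show "(u$1)^2 + (u$2)^2 + (u$3)^2 = 1" "(v$1)^2 + (v$2)^2 + (v$3)^2 = 1"
    by (simp_all add: inner_self_sum power2_eq_square)
  show "u$1 * v$1 + u$2 * v$2 + u$3 * v$3 = 0" using assms(3) by (simp add: inner_self_sum)
qed

lemma lap_rep:
  assumes "norm u = 1" "norm v = 1" "u \<bullet> v = 0"
    "\<forall>x. f x = (\<Sum>m\<le>n. \<gamma> m * (u \<bullet> x) ^ m * (v \<bullet> x) ^ (n - m))"
  shows "laplacian f x = (\<Sum>m\<le>n. \<gamma> m * (of_nat (m * (m - 1)) * (u \<bullet> x) ^ (m - 2) * (v \<bullet> x) ^ (n - m)
            + of_nat ((n - m) * (n - m - 1)) * (u \<bullet> x) ^ m * (v \<bullet> x) ^ (n - m - 2)))"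
proof -
  define s where "s = u \<bullet> x"
  define s' where "s' = v \<bullet> x"
  define X where "X i m = of_nat (m * (m - 1)) * s ^ (m - 2) * (u$i)^2 * s' ^ (n - m)
      + 2 * of_nat (m * (n - m)) * s ^ (m - 1) * s' ^ (n - m - 1) * u$i * v$i
      + of_nat ((n - m) * (n - m - 1)) * s ^ m * s' ^ (n - m - 2) * (v$i)^2" for i m
  have di: "deriv (deriv (\<lambda>t. f (x + t *\<^sub>R axis i 1))) 0 = (\<Sum>m\<le>n. \<gamma> m * X i m)" for i
  proof -
    define q where "q = (\<Sum>m\<le>n. smult (\<gamma> m) ([:s, u$i:] ^ m * [:s', v$i:] ^ (n - m)))"
    have "\<forall>t. f (x + t *\<^sub>R axis i 1) = poly q t"
    proof
      fix t
      have i1: "u \<bullet> (x + t *\<^sub>R axis i 1) = s + t * u$i" "v \<bullet> (x + t *\<^sub>R axis i 1) = s' + t * v$i"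
        by (simp_all add: inner_add_right inner_axis s_def s'_def)
      have "poly q t = (\<Sum>m\<le>n. \<gamma> m * ((s + t * u$i) ^ m * (s' + t * v$i) ^ (n - m)))"
        unfolding q_def by (simp add: poly_sum poly_power algebra_simps)
      then show "f (x + t *\<^sub>R axis i 1) = poly q t"
        using assms(4) i1 by (simp add: mult.assoc)
    qed
    then have "deriv (deriv (\<lambda>t. f (x + t *\<^sub>R axis i 1))) 0 = poly (pderiv (pderiv q)) 0"
      by (rule d2_poly)
    also have "\<dots> = (\<Sum>m\<le>n. \<gamma> m * poly (pderiv (pderiv ([:s, u$i:] ^ m * [:s', v$i:] ^ (n - m)))) 0)"
      unfolding q_def by (simp add: pderiv_sum pderiv_smult poly_sum)
    also have "\<dots> = (\<Sum>m\<le>n. \<gamma> m * X i m)"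
      unfolding X_def D2_prod by simp
    finally show ?thesis .
  qed
  note us = unit_sums[OF assms(1,2,3)]
  have "laplacian f x = (\<Sum>m\<le>n. \<gamma> m * X 1 m + \<gamma> m * X 2 m + \<gamma> m * X 3 m)"
    unfolding laplacian_def sum_3 di by (simp add: sum.distrib)
  also have "\<dots> = (\<Sum>m\<le>n. \<gamma> m * (of_nat (m * (m - 1)) * s ^ (m - 2) * s' ^ (n - m)
            + of_nat ((n - m) * (n - m - 1)) * s ^ m * s' ^ (n - m - 2)))"
  proof (rule sum.cong[OF refl])
    fix m
    have "\<gamma> m * X 1 m + \<gamma> m * X 2 m + \<gamma> m * X 3 m = \<gamma> m * (
        of_nat (m * (m - 1)) * s ^ (m - 2) * s' ^ (n - m) * ((u$1)^2 + (u$2)^2 + (u$3)^2)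
      + 2 * of_nat (m * (n - m)) * s ^ (m - 1) * s' ^ (n - m - 1) * (u$1 * v$1 + u$2 * v$2 + u$3 * v$3)
      + of_nat ((n - m) * (n - m - 1)) * s ^ m * s' ^ (n - m - 2) * ((v$1)^2 + (v$2)^2 + (v$3)^2))"
      unfolding X_def by (simp add: algebra_simps)
    then show "\<gamma> m * X 1 m + \<gamma> m * X 2 m + \<gamma> m * X 3 m = \<gamma> m * (of_nat (m * (m - 1)) * s ^ (m - 2) * s' ^ (n - m)
            + of_nat ((n - m) * (n - m - 1)) * s ^ m * s' ^ (n - m - 2))"
      unfolding us by simp
  qed
  finally show ?thesis unfolding s_def s'_def .
qed

lemma rec_from_fun:
  fixes \<gamma> :: "nat \<Rightarrow> real"
  assumes "\<forall>s. (\<Sum>m\<le>n. \<gamma> m * (of_nat (m * (m - 1)) * s ^ (m - 2) + of_nat ((n - m) * (n - m - 1)) * s ^ m)) = 0"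
  shows "\<forall>k. k + 2 \<le> n \<longrightarrow> of_nat ((k + 2) * (k + 1)) * \<gamma> (k + 2) + of_nat ((n - k) * (n - k - 1)) * \<gamma> k = 0"
proof -
  define P where "P = (\<Sum>m\<le>n. monom (\<gamma> m) m)"
  define Q where "Q = (\<Sum>m\<le>n. monom (\<gamma> m * of_nat ((n - m) * (n - m - 1))) m)"
  have pm: "poly (pderiv (pderiv (monom a m))) s = a * of_nat (m * (m - 1)) * s ^ (m - 2)" for a :: real and m s
    by (simp add: pderiv_monom poly_monom of_nat_mult mult_ac diff_diff_left numeral_2_eq_2)
  have "poly (pderiv (pderiv P) + Q) s = 0" for s
  proof -
    have "poly (pderiv (pderiv P) + Q) s
        = (\<Sum>m\<le>n. \<gamma> m * (of_nat (m * (m - 1)) * s ^ (m - 2) + of_nat ((n - m) * (n - m - 1)) * s ^ m))"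
      unfolding P_def Q_def poly_add pderiv_sum poly_sum pm poly_monom
      by (simp add: sum.distrib[symmetric] distrib_left mult.assoc)
    then show ?thesis using assms by simp
  qed
  then have R: "pderiv (pderiv P) + Q = 0"
    using poly_eq_poly_eq_iff[of "pderiv (pderiv P) + Q" 0] by (auto simp: fun_eq_iff)
  have cP: "coeff P j = (if j \<le> n then \<gamma> j else 0)" for j
    unfolding P_def by (simp add: coeff_sum coeff_monom)
  have cQ: "coeff Q j = (if j \<le> n then \<gamma> j * of_nat ((n - j) * (n - j - 1)) else 0)" for j
    unfolding Q_def by (simp add: coeff_sum coeff_monom)
  show ?thesis
  proof (intro allI impI)
    fix k assume k: "k + 2 \<le> n"
    have "coeff (pderiv (pderiv P) + Q) k = 0" using R by simp
    then have "of_nat (Suc k) * (of_nat (Suc (Suc k)) * \<gamma> (Suc (Suc k))) + \<gamma> k * of_nat ((n - k) * (n - k - 1)) = 0"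
      using k by (simp add: coeff_pderiv cP cQ)
    then show "of_nat ((k + 2) * (k + 1)) * \<gamma> (k + 2) + of_nat ((n - k) * (n - k - 1)) * \<gamma> k = 0"
      by (simp add: algebra_simps)
  qed
qed

lemma harm_rec:
  assumes "norm u = 1" "norm v = 1" "u \<bullet> v = 0"
    "\<forall>x. f x = (\<Sum>m\<le>n. \<gamma> m * (u \<bullet> x) ^ m * (v \<bullet> x) ^ (n - m))"
    "\<forall>x. laplacian f x = 0"
  shows "\<forall>k. k + 2 \<le> n \<longrightarrow> of_nat ((k + 2) * (k + 1)) * \<gamma> (k + 2) + of_nat ((n - k) * (n - k - 1)) * \<gamma> k = 0"
proof (rule rec_from_fun, rule allI)
  fix s :: real
  define x where "x = s *\<^sub>R u + v"
  have uu: "u \<bullet> u = 1" "v \<bullet> v = 1" using assms by (simp_all add: power2_norm_eq_inner[symmetric])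
  have sx: "u \<bullet> x = s" "v \<bullet> x = 1" unfolding x_def using uu assms(3)
    by (simp_all add: inner_add_right inner_commute)
  show "(\<Sum>m\<le>n. \<gamma> m * (of_nat (m * (m - 1)) * s ^ (m - 2) + of_nat ((n - m) * (n - m - 1)) * s ^ m)) = 0"
    using lap_rep[OF assms(1-4), of x] assms(5) sx by simp
qed

interpretation fv: vector_space fscale
  by unfold_locales (auto simp: fscale_def fun_eq_iff algebra_simps)

lemma Gf_rep:
  "Gf n u v c x = (\<Sum>m\<le>n. Re (c * of_nat (n choose m) * \<i> ^ (n - m)) * (u \<bullet> x) ^ m * (v \<bullet> x) ^ (n - m))"
proof -
  have "hz u v x ^ n = (\<Sum>m\<le>n. of_nat (n choose m) * complex_of_real (u \<bullet> x) ^ m * (\<i> * complex_of_real (v \<bullet> x)) ^ (n - m))"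
    unfolding hz_def by (rule binomial_ring)
  then have "c * hz u v x ^ n = (\<Sum>m\<le>n. (c * of_nat (n choose m) * \<i> ^ (n - m)) * complex_of_real ((u \<bullet> x) ^ m * (v \<bullet> x) ^ (n - m)))"
    by (simp add: sum_distrib_left power_mult_distrib algebra_simps)
  then show ?thesis unfolding Gf_def by (simp add: Re_sum algebra_simps)
qed

lemma uniq_rec:
  fixes \<delta> :: "nat \<Rightarrow> real"
  assumes rec: "\<forall>k. k + 2 \<le> n \<longrightarrow> of_nat ((k + 2) * (k + 1)) * \<delta> (k + 2) + of_nat ((n - k) * (n - k - 1)) * \<delta> k = 0"
    and "\<delta> n = 0" "\<delta> (n - 1) = 0"
  shows "\<forall>m\<le>n. \<delta> m = 0"
proof -
  have "\<forall>m. m \<le> n \<and> n - m = j \<longrightarrow> \<delta> m = 0" for j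
  proof (induction j rule: less_induct)
    case (less j)
    show ?case
    proof (intro allI impI)
      fix m assume m: "m \<le> n \<and> n - m = j"
      show "\<delta> m = 0"
      proof (cases "j \<le> 1")
        case True
        then have "m = n \<or> m = n - 1" using m by auto
        then show ?thesis using assms(2,3) by auto
      next
        case False
        then have k: "m + 2 \<le> n" using m by auto
        have "\<delta> (m + 2) = 0" using less.IH[of "n - (m + 2)"] k m by auto
        then have "of_nat ((n - m) * (n - m - 1)) * \<delta> m = 0" using rec k by auto
        moreover have "(n - m) * (n - m - 1) \<noteq> 0" using k by auto
        ultimately show ?thesis by simp
      qed
    qed
  qed
  then show ?thesis by blast
qed

lemma span_axial:
  assumes fr: "frm \<omega> u v" and f: "f \<in> harmonic_axial n \<omega>"
  shows "f \<in> fv.span {Gf n u v 1, Gf n u v (- \<i>)}"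
proof -
  have nu: "norm u = 1" "norm v = 1" "u \<bullet> v = 0" using fr unfolding frm_def by auto
  obtain \<gamma> where g: "\<forall>x. f x = (\<Sum>m\<le>n. \<gamma> m * (u \<bullet> x) ^ m * (v \<bullet> x) ^ (n - m))"
    using axial_rep[OF fr f] by blast
  have lap0: "\<forall>x. laplacian f x = 0" using f unfolding harmonic_axial_def harmonic_hom_def by auto
  define g1 where "g1 m = Re (1 * of_nat (n choose m) * \<i> ^ (n - m))" for m
  define g2 where "g2 m = Re ((- \<i>) * of_nat (n choose m) * \<i> ^ (n - m))" for m
  have r: "\<forall>k. k + 2 \<le> n \<longrightarrow> of_nat ((k + 2) * (k + 1)) * \<gamma> (k + 2) + of_nat ((n - k) * (n - k - 1)) * \<gamma> k = 0"
    by (rule harm_rec[OF nu g lap0])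
  have lapG: "\<forall>x. laplacian (Gf n u v c) x = 0" for c
    using Gf_in[OF fr] unfolding harmonic_axial_def harmonic_hom_def by auto
  have r1: "\<forall>k. k + 2 \<le> n \<longrightarrow> of_nat ((k + 2) * (k + 1)) * g1 (k + 2) + of_nat ((n - k) * (n - k - 1)) * g1 k = 0"
    by (rule harm_rec[OF nu _ lapG[of 1]]) (simp only: Gf_rep g1_def, simp)
  have r2: "\<forall>k. k + 2 \<le> n \<longrightarrow> of_nat ((k + 2) * (k + 1)) * g2 (k + 2) + of_nat ((n - k) * (n - k - 1)) * g2 k = 0"
    by (rule harm_rec[OF nu _ lapG[of "- \<i>"]]) (simp only: Gf_rep g2_def, simp)
  show ?thesis
  proof (cases "n = 0")
    case True
    have "f = fscale (\<gamma> 0) (Gf n u v 1)"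
      using g True by (auto simp: fun_eq_iff fscale_def Gf_def)
    then show ?thesis by (simp add: fv.span_scale fv.span_base)
  next
    case False
    define a where "a = \<gamma> n"
    define b where "b = \<gamma> (n - 1) / of_nat n"
    define \<delta> where "\<delta> m = \<gamma> m - a * g1 m - b * g2 m" for m
    have cn: "n choose (n - 1) = n"
      using binomial_symmetric[of "n - 1" n] False by simp
    have g1n: "g1 n = 1" "g1 (n - 1) = 0" using False cn by (simp_all add: g1_def)
    have g2n: "g2 n = 0" "g2 (n - 1) = of_nat n" using False cn by (simp_all add: g2_def)
    have rd: "\<forall>k. k + 2 \<le> n \<longrightarrow> of_nat ((k + 2) * (k + 1)) * \<delta> (k + 2) + of_nat ((n - k) * (n - k - 1)) * \<delta> k = 0"
    proof (intro allI impI)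
      fix k assume k: "k + 2 \<le> n"
      have "of_nat ((k + 2) * (k + 1)) * \<delta> (k + 2) + of_nat ((n - k) * (n - k - 1)) * \<delta> k
        = (of_nat ((k + 2) * (k + 1)) * \<gamma> (k + 2) + of_nat ((n - k) * (n - k - 1)) * \<gamma> k)
          - a * (of_nat ((k + 2) * (k + 1)) * g1 (k + 2) + of_nat ((n - k) * (n - k - 1)) * g1 k)
          - b * (of_nat ((k + 2) * (k + 1)) * g2 (k + 2) + of_nat ((n - k) * (n - k - 1)) * g2 k)"
        unfolding \<delta>_def by (simp add: algebra_simps)
      then show "of_nat ((k + 2) * (k + 1)) * \<delta> (k + 2) + of_nat ((n - k) * (n - k - 1)) * \<delta> k = 0"
        using r r1 r2 k by simp
    qed
    have "\<delta> n = 0" using g1n g2n by (simp add: \<delta>_def a_def)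
    moreover have "\<delta> (n - 1) = 0" using g1n g2n False by (simp add: \<delta>_def b_def)
    ultimately have d0: "\<forall>m\<le>n. \<delta> m = 0" using uniq_rec[OF rd] by blast
    have "f x = a * Gf n u v 1 x + b * Gf n u v (- \<i>) x" for x
    proof -
      have "f x = (\<Sum>m\<le>n. (a * g1 m + b * g2 m) * (u \<bullet> x) ^ m * (v \<bullet> x) ^ (n - m))"
        unfolding g[rule_format] using d0 by (intro sum.cong) (auto simp: \<delta>_def algebra_simps)
      also have "\<dots> = a * Gf n u v 1 x + b * Gf n u v (- \<i>) x"
        unfolding Gf_rep g1_def g2_def by (simp add: sum_distrib_left sum.distrib algebra_simps)
      finally show ?thesis .
    qed
    then have "f = fscale a (Gf n u v 1) + fscale b (Gf n u v (- \<i>))"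
      by (auto simp: fun_eq_iff fscale_def)
    then show ?thesis by (simp add: fv.span_add fv.span_scale fv.span_base)
  qed
qed

lemma degs_sum_split:
  "(\<Sum>\<alpha>\<in>degs m. g \<alpha>) = (\<Sum>a\<le>m. \<Sum>b\<le>m - a. g (a, b, m - a - b))"
proof -
  have "(\<Sum>\<alpha>\<in>degs m. g \<alpha>) = (\<Sum>p\<in>Sigma {..m} (\<lambda>a. {..m - a}). g (fst p, snd p, m - fst p - snd p))"
    by (rule sum.reindex_bij_witness[where i = "\<lambda>p. (fst p, snd p, m - fst p - snd p)" and j = "\<lambda>(a, b, d). (a, b)"])
       (auto simp: degs_def)
  also have "\<dots> = (\<Sum>a\<le>m. \<Sum>b\<le>m - a. g (a, b, m - a - b))"
    by (subst sum.Sigma) (auto simp: split_def)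
  finally show ?thesis .
qed

lemma mon_indep:
  assumes "\<forall>x. (\<Sum>\<alpha>\<in>degs m. e \<alpha> * mon \<alpha> x) = 0"
  shows "\<forall>\<alpha>\<in>degs m. e \<alpha> = 0"
proof -
  have z: "(\<Sum>a\<le>m. (\<Sum>b\<le>m - a. e (a, b, m - a - b) * t ^ b) * s ^ a) = 0" for s t :: real
  proof -
    have "(\<Sum>\<alpha>\<in>degs m. e \<alpha> * mon \<alpha> (vector [s, t, 1])) = 0" using assms by blast
    then show ?thesis
      unfolding degs_sum_split by (simp add: mon_def vector_3 sum_distrib_left sum_distrib_right algebra_simps)
  qed
  have z1: "\<forall>a\<le>m. (\<Sum>b\<le>m - a. e (a, b, m - a - b) * t ^ b) = 0" for t :: real
  proof -
    have "\<forall>s. (\<Sum>a\<le>m. (\<Sum>b\<le>m - a. e (a, b, m - a - b) * t ^ b) * s ^ a) = 0"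
      using z by blast
    then show ?thesis
      by (subst (asm) polyfun_eq_0[of "\<lambda>a. \<Sum>b\<le>m - a. e (a, b, m - a - b) * t ^ b" m])
  qed
  have z2: "e (a, b, m - a - b) = 0" if "a \<le> m" "b \<le> m - a" for a b
  proof -
    have "\<forall>t. (\<Sum>b\<le>m - a. e (a, b, m - a - b) * t ^ b) = (0::real)"
      using z1 that by blast
    then have "\<forall>b'\<le>m - a. e (a, b', m - a - b') = 0"
      by (subst (asm) polyfun_eq_0[of "\<lambda>b. e (a, b, m - a - b)" "m - a"])
    then show ?thesis using that by blast
  qed
  show ?thesis
  proof
    fix \<alpha> assume "\<alpha> \<in> degs m"
    then obtain a b d where "\<alpha> = (a, b, d)" "a + b + d = m" unfolding degs_def by auto
    moreover have "m - a - b = d" "a \<le> m" "b \<le> m - a" using calculation by auto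
    ultimately show "e \<alpha> = 0" using z2[of a b] by simp
  qed
qed

definition ecmp :: "3 \<Rightarrow> nat \<times> nat \<times> nat \<Rightarrow> nat" where
  "ecmp i \<alpha> = (case \<alpha> of (a, b, d) \<Rightarrow> if i = 1 then a else if i = 2 then b else d)"

definition setz :: "3 \<Rightarrow> nat \<times> nat \<times> nat \<Rightarrow> nat \<times> nat \<times> nat" where
  "setz i \<alpha> = (case \<alpha> of (a, b, d) \<Rightarrow> if i = 1 then (0, b, d) else if i = 2 then (a, 0, d) else (a, b, 0))"

lemma mon_axis: "mon \<alpha> (x + t *\<^sub>R axis i 1) = (x$i + t) ^ (ecmp i \<alpha>) * mon (setz i \<alpha>) x"
  using exhaust_3[of i] by (cases \<alpha>) (auto simp: mon_def ecmp_def setz_def axis_def)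

lemma mon_unsh2: "mon (unsh i (unsh i \<alpha>)) x = x$i ^ (ecmp i \<alpha> - 2) * mon (setz i \<alpha>) x"
  using exhaust_3[of i] by (cases \<alpha>) (auto simp: mon_def ecmp_def setz_def unsh_def diff_diff_left numeral_2_eq_2)

lemma ecmp_sh: "ecmp i (sh i \<alpha>) = ecmp i \<alpha> + 1"
  using exhaust_3[of i] by (cases \<alpha>) (auto simp: ecmp_def sh_def)

lemma sh_unsh: "ecmp i \<alpha> \<ge> 1 \<Longrightarrow> sh i (unsh i \<alpha>) = \<alpha>"
  using exhaust_3[of i] by (cases \<alpha>) (auto simp: ecmp_def sh_def unsh_def)

lemma ecmp_unsh: "ecmp i (unsh i \<alpha>) = ecmp i \<alpha> - 1"
  using exhaust_3[of i] by (cases \<alpha>) (auto simp: ecmp_def unsh_def)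

lemma unsh_degs: "\<alpha> \<in> degs (Suc n) \<Longrightarrow> ecmp i \<alpha> \<ge> 1 \<Longrightarrow> unsh i \<alpha> \<in> degs n"
  using exhaust_3[of i] by (cases \<alpha>) (auto simp: ecmp_def unsh_def degs_def)

lemma D2_pow: "poly (pderiv (pderiv ([:s, p:] ^ k))) 0 = of_nat (k * (k - 1)) * p^2 * (s::real) ^ (k - 2)"
  using D2_prod[of s p k 0 0 0] by (simp add: algebra_simps)

lemma d2_mon_sum:
  "deriv (deriv (\<lambda>t. \<Sum>\<alpha>\<in>A. c \<alpha> * mon \<alpha> (x + t *\<^sub>R axis i 1))) 0
     = (\<Sum>\<alpha>\<in>A. c \<alpha> * of_nat (ecmp i \<alpha> * (ecmp i \<alpha> - 1)) * mon (unsh i (unsh i \<alpha>)) x)"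
proof -
  define q where "q = (\<Sum>\<alpha>\<in>A. smult (c \<alpha> * mon (setz i \<alpha>) x) ([:x$i, 1:] ^ (ecmp i \<alpha>)))"
  have "\<forall>t. (\<Sum>\<alpha>\<in>A. c \<alpha> * mon \<alpha> (x + t *\<^sub>R axis i 1)) = poly q t"
    by (simp add: q_def poly_sum mon_axis poly_power algebra_simps)
  then have "deriv (deriv (\<lambda>t. \<Sum>\<alpha>\<in>A. c \<alpha> * mon \<alpha> (x + t *\<^sub>R axis i 1))) 0 = poly (pderiv (pderiv q)) 0"
    by (rule d2_poly)
  also have "\<dots> = (\<Sum>\<alpha>\<in>A. c \<alpha> * mon (setz i \<alpha>) x * (of_nat (ecmp i \<alpha> * (ecmp i \<alpha> - 1)) * x$i ^ (ecmp i \<alpha> - 2)))"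
    unfolding q_def by (simp add: pderiv_sum pderiv_smult poly_sum D2_pow)
  also have "\<dots> = (\<Sum>\<alpha>\<in>A. c \<alpha> * of_nat (ecmp i \<alpha> * (ecmp i \<alpha> - 1)) * mon (unsh i (unsh i \<alpha>)) x)"
    by (simp add: mon_unsh2 algebra_simps)
  finally show ?thesis .
qed

lemma reindex2:
  assumes "2 \<le> n"
  shows "(\<Sum>\<alpha>\<in>degs n. c \<alpha> * of_nat (ecmp i \<alpha> * (ecmp i \<alpha> - 1)) * mon (unsh i (unsh i \<alpha>)) x)
    = (\<Sum>\<beta>\<in>degs (n - 2). c (sh i (sh i \<beta>)) * of_nat ((ecmp i \<beta> + 2) * (ecmp i \<beta> + 1)) * mon \<beta> x)"
proof -
  define S where "S = (\<lambda>\<beta>. sh i (sh i \<beta>)) ` degs (n - 2)"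
  have nn: "n = Suc (Suc (n - 2))" using assms by simp
  have Ssub: "S \<subseteq> degs n" unfolding S_def using sh_degs nn by (metis image_subsetI)
  have out: "c \<alpha> * of_nat (ecmp i \<alpha> * (ecmp i \<alpha> - 1)) * mon (unsh i (unsh i \<alpha>)) x = 0"
    if "\<alpha> \<in> degs n - S" for \<alpha>
  proof -
    have "ecmp i \<alpha> < 2"
    proof (rule ccontr)
      assume "\<not> ecmp i \<alpha> < 2"
      then have c2: "ecmp i \<alpha> \<ge> 2" by simp
      have u1: "unsh i \<alpha> \<in> degs (Suc (n - 2))" using unsh_degs[of \<alpha> "Suc (n - 2)" i] that c2 nn by auto
      have "ecmp i (unsh i \<alpha>) \<ge> 1" using c2 by (simp add: ecmp_unsh)
      then have "unsh i (unsh i \<alpha>) \<in> degs (n - 2)" using unsh_degs u1 by blast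
      moreover have "sh i (sh i (unsh i (unsh i \<alpha>))) = \<alpha>"
        using c2 \<open>ecmp i (unsh i \<alpha>) \<ge> 1\<close> by (simp add: sh_unsh)
      ultimately have "\<alpha> \<in> S" unfolding S_def by (metis image_eqI)
      then show False using that by blast
    qed
    then have "ecmp i \<alpha> * (ecmp i \<alpha> - 1) = 0" by (cases "ecmp i \<alpha>") auto
    then show ?thesis by simp
  qed
  have "(\<Sum>\<alpha>\<in>degs n. c \<alpha> * of_nat (ecmp i \<alpha> * (ecmp i \<alpha> - 1)) * mon (unsh i (unsh i \<alpha>)) x)
      = (\<Sum>\<alpha>\<in>S. c \<alpha> * of_nat (ecmp i \<alpha> * (ecmp i \<alpha> - 1)) * mon (unsh i (unsh i \<alpha>)) x)"
    using finite_degs Ssub out by (intro sum.mono_neutral_right) auto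
  also have "\<dots> = (\<Sum>\<beta>\<in>degs (n - 2). c (sh i (sh i \<beta>)) * of_nat ((ecmp i \<beta> + 2) * (ecmp i \<beta> + 1)) * mon \<beta> x)"
  proof -
    have inj: "inj_on (\<lambda>\<beta>. sh i (sh i \<beta>)) (degs (n - 2))" by (metis (mono_tags, lifting) inj_onI unsh_sh)
    show ?thesis unfolding S_def by (simp add: sum.reindex[OF inj] ecmp_sh unsh_sh algebra_simps)
  qed
  finally show ?thesis .
qed

lemma harm_coef_rec:
  assumes "\<forall>x. laplacian f x = 0" "f = (\<lambda>x. \<Sum>\<alpha>\<in>degs n. c \<alpha> * mon \<alpha> x)" "2 \<le> n"
  shows "\<forall>\<beta>\<in>degs (n - 2). (\<Sum>i\<in>UNIV. c (sh i (sh i \<beta>)) * of_nat ((ecmp i \<beta> + 2) * (ecmp i \<beta> + 1))) = 0"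
proof (rule mon_indep, rule allI)
  fix x
  have "laplacian f x = (\<Sum>i\<in>UNIV. \<Sum>\<beta>\<in>degs (n - 2). c (sh i (sh i \<beta>)) * of_nat ((ecmp i \<beta> + 2) * (ecmp i \<beta> + 1)) * mon \<beta> x)"
    unfolding laplacian_def assms(2) d2_mon_sum reindex2[OF assms(3)] ..
  also have "\<dots> = (\<Sum>\<beta>\<in>degs (n - 2). (\<Sum>i\<in>UNIV. c (sh i (sh i \<beta>)) * of_nat ((ecmp i \<beta> + 2) * (ecmp i \<beta> + 1))) * mon \<beta> x)"
    by (rule trans[OF sum.swap]) (simp add: sum_distrib_right)
  finally show "(\<Sum>\<beta>\<in>degs (n - 2). (\<Sum>i\<in>UNIV. c (sh i (sh i \<beta>)) * of_nat ((ecmp i \<beta> + 2) * (ecmp i \<beta> + 1))) * mon \<beta> x) = 0"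
    using assms(1) by simp
qed

fun Kc :: "nat \<times> nat \<times> nat \<Rightarrow> nat \<Rightarrow> nat \<Rightarrow> nat \<Rightarrow> real" where
  "Kc \<beta> a b 0 = (if \<beta> = (a, b, 0) then 1 else 0)"
| "Kc \<beta> a b (Suc 0) = (if \<beta> = (a, b, 1) then 1 else 0)"
| "Kc \<beta> a b (Suc (Suc d)) = - (of_nat ((a + 2) * (a + 1)) * Kc \<beta> (a + 2) b d
      + of_nat ((b + 2) * (b + 1)) * Kc \<beta> a (b + 2) d) / of_nat ((d + 2) * (d + 1))"

definition Bset :: "nat \<Rightarrow> (nat \<times> nat \<times> nat) set" where
  "Bset n = {\<beta> \<in> degs n. ecmp 3 \<beta> \<le> 1}"

lemma coef_expand:
  assumes rec: "\<forall>a b d. a + b + d + 2 = n \<longrightarrow>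
     of_nat ((a + 2) * (a + 1)) * c (a + 2, b, d) + of_nat ((b + 2) * (b + 1)) * c (a, b + 2, d)
     + of_nat ((d + 2) * (d + 1)) * c (a, b, d + 2) = 0"
  shows "\<forall>a b. a + b + d = n \<longrightarrow> c (a, b, d) = (\<Sum>\<beta>\<in>Bset n. c \<beta> * Kc \<beta> a b d)"
proof (induction d rule: less_induct)
  case (less d)
  show ?case
  proof (intro allI impI)
    fix a b assume ab: "a + b + d = n"
    show "c (a, b, d) = (\<Sum>\<beta>\<in>Bset n. c \<beta> * Kc \<beta> a b d)"
    proof (cases d)
      case 0
      have m: "(a, b, 0) \<in> Bset n" using ab 0 by (simp add: Bset_def degs_def ecmp_def)
      have fB: "finite (Bset n)" using finite_degs unfolding Bset_def by simp
      have "(\<Sum>\<beta>\<in>Bset n. c \<beta> * Kc \<beta> a b d) = (\<Sum>\<beta>\<in>Bset n. if \<beta> = (a, b, 0) then c \<beta> else 0)"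
        using 0 by (intro sum.cong) auto
      also have "\<dots> = c (a, b, 0)" by (subst sum.delta[OF fB]) (simp add: m[simplified])
      finally show ?thesis using 0 by simp
    next
      case (Suc d1)
      show ?thesis
      proof (cases d1)
        case 0
        have m: "(a, b, 1) \<in> Bset n" using ab Suc 0 by (simp add: Bset_def degs_def ecmp_def)
        have fB: "finite (Bset n)" using finite_degs unfolding Bset_def by simp
        have "(\<Sum>\<beta>\<in>Bset n. c \<beta> * Kc \<beta> a b d) = (\<Sum>\<beta>\<in>Bset n. if \<beta> = (a, b, 1) then c \<beta> else 0)"
          using Suc 0 by (intro sum.cong) auto
        also have "\<dots> = c (a, b, 1)" by (subst sum.delta[OF fB]) (simp add: m[simplified])
        finally show ?thesis using Suc 0 by simp
      next
        case (Suc d')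
        have d: "d = d' + 2" using \<open>d = Suc d1\<close> Suc by simp
        have IH1: "c (a + 2, b, d') = (\<Sum>\<beta>\<in>Bset n. c \<beta> * Kc \<beta> (a + 2) b d')"
          using less.IH[of d'] d ab by auto
        have IH2: "c (a, b + 2, d') = (\<Sum>\<beta>\<in>Bset n. c \<beta> * Kc \<beta> a (b + 2) d')"
          using less.IH[of d'] d ab by auto
        have D0: "(d' + 2) * (d' + 1) \<noteq> 0" by simp
        have D: "of_nat ((d' + 2) * (d' + 1)) \<noteq> (0::real)" by (simp only: of_nat_eq_0_iff D0 not_False_eq_True)
        have "c (a, b, d' + 2) = - (of_nat ((a + 2) * (a + 1)) * c (a + 2, b, d') + of_nat ((b + 2) * (b + 1)) * c (a, b + 2, d'))
            / of_nat ((d' + 2) * (d' + 1))"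
        proof -
          have eq: "of_nat ((d' + 2) * (d' + 1)) * c (a, b, d' + 2) = - (of_nat ((a + 2) * (a + 1)) * c (a + 2, b, d') + of_nat ((b + 2) * (b + 1)) * c (a, b + 2, d'))"
          proof -
            have p: "a + b + d' + 2 = n" using ab d by simp
            show ?thesis using rec[rule_format, OF p] by (simp only: add_eq_0_iff_both_eq_0 eq_neg_iff_add_eq_0 add.assoc add.commute[of "of_nat ((d' + 2) * (d' + 1)) * c (a, b, d' + 2)"])
          qed
          have "c (a, b, d' + 2) = (of_nat ((d' + 2) * (d' + 1)) * c (a, b, d' + 2)) / of_nat ((d' + 2) * (d' + 1))"
            using D by simp
          then show ?thesis unfolding eq .
        qed
        also have "\<dots> = (\<Sum>\<beta>\<in>Bset n. c \<beta> * Kc \<beta> a b (Suc (Suc d')))"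
        proof -
          define A where "A = (of_nat ((a + 2) * (a + 1)) :: real)"
          define B where "B = (of_nat ((b + 2) * (b + 1)) :: real)"
          define E where "E = (of_nat ((d' + 2) * (d' + 1)) :: real)"
          have "(\<Sum>\<beta>\<in>Bset n. c \<beta> * Kc \<beta> a b (Suc (Suc d')))
              = (\<Sum>\<beta>\<in>Bset n. - (A * (c \<beta> * Kc \<beta> (a + 2) b d') + B * (c \<beta> * Kc \<beta> a (b + 2) d')) / E)"
            unfolding A_def B_def E_def by (intro sum.cong) (simp_all add: algebra_simps)
          also have "\<dots> = - (A * (\<Sum>\<beta>\<in>Bset n. c \<beta> * Kc \<beta> (a + 2) b d') + B * (\<Sum>\<beta>\<in>Bset n. c \<beta> * Kc \<beta> a (b + 2) d')) / E"
            by (simp add: sum_divide_distrib[symmetric] sum_negf sum.distrib sum_distrib_left sum_subtractf)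
          finally show ?thesis unfolding IH1 IH2 A_def B_def E_def by simp
        qed
        finally show ?thesis using d by simp
      qed
    qed
  qed
qed

lemma card_Bset: "card (Bset n) \<le> 2 * n + 1"
proof -
  have sub: "Bset n \<subseteq> (\<lambda>a. (a, n - a, 0::nat)) ` {..n} \<union> (\<lambda>a. (a, n - 1 - a, 1::nat)) ` {..<n}"
  proof
    fix \<beta> assume "\<beta> \<in> Bset n"
    then obtain a b d where \<beta>: "\<beta> = (a, b, d)" "a + b + d = n" "d \<le> 1"
      unfolding Bset_def degs_def ecmp_def by auto
    show "\<beta> \<in> (\<lambda>a. (a, n - a, 0::nat)) ` {..n} \<union> (\<lambda>a. (a, n - 1 - a, 1::nat)) ` {..<n}"
    proof (cases d)
      case 0 then show ?thesis using \<beta> by (auto intro!: image_eqI[of _ _ a])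
    next
      case (Suc e) then have "d = 1" using \<beta> by simp
      then show ?thesis using \<beta> by (auto intro!: image_eqI[of _ _ a])
    qed
  qed
  have "card (Bset n) \<le> card ((\<lambda>a. (a, n - a, 0::nat)) ` {..n} \<union> (\<lambda>a. (a, n - 1 - a, 1::nat)) ` {..<n})"
    by (rule card_mono[OF _ sub]) auto
  also have "\<dots> \<le> card ((\<lambda>a. (a, n - a, 0::nat)) ` {..n}) + card ((\<lambda>a. (a, n - 1 - a, 1::nat)) ` {..<n})"
    by (rule card_Un_le)
  also have "\<dots> \<le> card {..n} + card {..<n}"
    by (intro add_mono card_image_le) auto
  finally show ?thesis by simp
qed

lemma fsum_apply: "(\<Sum>i\<in>A. g i) x = (\<Sum>i\<in>A. g i x)"
  by (induction A rule: infinite_finite_induct) auto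

definition Fb :: "nat \<Rightarrow> nat \<times> nat \<times> nat \<Rightarrow> real^3 \<Rightarrow> real" where
  "Fb n \<beta> x = (\<Sum>\<alpha>\<in>degs n. (case \<alpha> of (a, b, d) \<Rightarrow> Kc \<beta> a b d) * mon \<alpha> x)"

lemma harmonic_span:
  assumes "f \<in> harmonic_hom n"
  shows "f \<in> fv.span (Fb n ` Bset n)"
proof -
  obtain c where fc: "f = (\<lambda>x. \<Sum>\<alpha>\<in>degs n. c \<alpha> * mon \<alpha> x)"
    using assms unfolding harmonic_hom_def hom_poly_iff by blast
  have lap: "\<forall>x. laplacian f x = 0" using assms unfolding harmonic_hom_def by auto
  have rec: "\<forall>a b d. a + b + d + 2 = n \<longrightarrow>
     of_nat ((a + 2) * (a + 1)) * c (a + 2, b, d) + of_nat ((b + 2) * (b + 1)) * c (a, b + 2, d)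
     + of_nat ((d + 2) * (d + 1)) * c (a, b, d + 2) = 0"
  proof (intro allI impI)
    fix a b d assume abd: "a + b + d + 2 = n"
    then have "(a, b, d) \<in> degs (n - 2)" "2 \<le> n" by (auto simp: degs_def)
    then have "(\<Sum>i\<in>UNIV. c (sh i (sh i (a, b, d))) * of_nat ((ecmp i (a, b, d) + 2) * (ecmp i (a, b, d) + 1))) = 0"
      using harm_coef_rec[OF lap fc] by blast
    moreover have "sh 1 (sh 1 (a, b, d)) = (a + 2, b, d)" "sh 2 (sh 2 (a, b, d)) = (a, b + 2, d)"
      "sh 3 (sh 3 (a, b, d)) = (a, b, d + 2)" by (simp_all add: sh_def)
    moreover have "ecmp 1 (a, b, d) = a" "ecmp 2 (a, b, d) = b" "ecmp 3 (a, b, d) = d"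
      by (simp_all add: ecmp_def)
    ultimately show "of_nat ((a + 2) * (a + 1)) * c (a + 2, b, d) + of_nat ((b + 2) * (b + 1)) * c (a, b + 2, d)
     + of_nat ((d + 2) * (d + 1)) * c (a, b, d + 2) = 0"
      by (simp only: sum_3) (simp add: mult.commute)
  qed
  have ce: "c \<alpha> = (\<Sum>\<beta>\<in>Bset n. c \<beta> * (case \<alpha> of (a, b, d) \<Rightarrow> Kc \<beta> a b d))" if "\<alpha> \<in> degs n" for \<alpha>
  proof -
    obtain a b d where \<alpha>: "\<alpha> = (a, b, d)" by (cases \<alpha>)
    then have "a + b + d = n" using that by (simp add: degs_def)
    then show ?thesis using coef_expand[OF rec, of d] \<alpha> by simp
  qed
  have "f = (\<Sum>\<beta>\<in>Bset n. fscale (c \<beta>) (Fb n \<beta>))"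
  proof (rule ext)
    fix x
    have "f x = (\<Sum>\<alpha>\<in>degs n. (\<Sum>\<beta>\<in>Bset n. c \<beta> * (case \<alpha> of (a, b, d) \<Rightarrow> Kc \<beta> a b d)) * mon \<alpha> x)"
      unfolding fc using ce by (intro sum.cong) auto
    also have "\<dots> = (\<Sum>\<beta>\<in>Bset n. c \<beta> * Fb n \<beta> x)"
    proof -
      have "(\<Sum>\<alpha>\<in>degs n. (\<Sum>\<beta>\<in>Bset n. c \<beta> * (case \<alpha> of (a, b, d) \<Rightarrow> Kc \<beta> a b d)) * mon \<alpha> x)
          = (\<Sum>\<alpha>\<in>degs n. \<Sum>\<beta>\<in>Bset n. c \<beta> * ((case \<alpha> of (a, b, d) \<Rightarrow> Kc \<beta> a b d) * mon \<alpha> x))"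
        by (simp add: sum_distrib_right mult.assoc)
      also have "\<dots> = (\<Sum>\<beta>\<in>Bset n. \<Sum>\<alpha>\<in>degs n. c \<beta> * ((case \<alpha> of (a, b, d) \<Rightarrow> Kc \<beta> a b d) * mon \<alpha> x))"
        by (rule sum.swap)
      also have "\<dots> = (\<Sum>\<beta>\<in>Bset n. c \<beta> * Fb n \<beta> x)"
        unfolding Fb_def by (simp add: sum_distrib_left)
      finally show ?thesis .
    qed
    finally show "f x = (\<Sum>\<beta>\<in>Bset n. fscale (c \<beta>) (Fb n \<beta>)) x"
      by (simp add: fsum_apply fscale_def)
  qed
  also have "\<dots> \<in> fv.span (Fb n ` Bset n)"
    by (intro fv.span_sum fv.span_scale fv.span_base) auto
  finally show ?thesis .
qed

definition sel :: "bool \<Rightarrow> complex" where "sel b = (if b then 1 else - \<i>)"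

definition cw :: "(nat \<times> bool \<Rightarrow> real) \<Rightarrow> nat \<Rightarrow> complex" where
  "cw w k = complex_of_real (w (k, True)) - \<i> * complex_of_real (w (k, False))"

lemma fscale_sum_apply: "(\<Sum>p\<in>I. fscale (w p) (\<phi> p)) x = (\<Sum>p\<in>I. w p * \<phi> p x)"
  by (simp add: fsum_apply fscale_def)

lemma sum_KU:
  "(\<Sum>p\<in>K \<times> UNIV. w p * Gf n (u (fst p)) (v (fst p)) (sel (snd p)) x)
     = (\<Sum>k\<in>K. Re (cw w k * hz (u k) (v k) x ^ n))"
proof -
  have "(\<Sum>p\<in>K \<times> UNIV. w p * Gf n (u (fst p)) (v (fst p)) (sel (snd p)) x)
      = (\<Sum>k\<in>K. \<Sum>b\<in>UNIV. w (k, b) * Gf n (u k) (v k) (sel b) x)"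
    by (simp add: sum.cartesian_product split_def)
  also have "\<dots> = (\<Sum>k\<in>K. Re (cw w k * hz (u k) (v k) x ^ n))"
    by (simp add: UNIV_bool Gf_def sel_def cw_def algebra_simps)
  finally show ?thesis .
qed

lemma cw_zero: "cw w k = 0 \<Longrightarrow> w (k, True) = 0 \<and> w (k, False) = 0"
  unfolding cw_def by (simp add: complex_eq_iff)

lemma fam_indep:
  assumes "finite I" "\<forall>w. (\<Sum>p\<in>I. fscale (w p) (\<phi> p)) = 0 \<longrightarrow> (\<forall>p\<in>I. w p = 0)"
  shows "inj_on \<phi> I" "fv.independent (\<phi> ` I)"
proof -
  show inj: "inj_on \<phi> I"
  proof (rule inj_onI, rule ccontr)
    fix p q assume pq: "p \<in> I" "q \<in> I" "\<phi> p = \<phi> q" "p \<noteq> q"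
    define w where "w i = (if i = p then 1 else if i = q then -1 else 0 :: real)" for i
    have "(\<Sum>i\<in>I. fscale (w i) (\<phi> i)) = fscale (w p) (\<phi> p) + fscale (w q) (\<phi> q)"
    proof -
      have "(\<Sum>i\<in>I. fscale (w i) (\<phi> i)) = (\<Sum>i\<in>{p, q}. fscale (w i) (\<phi> i))"
        using assms(1) pq by (intro sum.mono_neutral_right) (auto simp: w_def fscale_def fun_eq_iff)
      then show ?thesis using pq by simp
    qed
    also have "\<dots> = 0" using pq by (simp add: w_def fscale_def fun_eq_iff)
    finally have "w p = 0" using assms(2) pq by blast
    then show False by (simp add: w_def)
  qed
  show "fv.independent (\<phi> ` I)"
  proof (rule fv.independent_if_scalars_zero)
    show "finite (\<phi> ` I)" using assms(1) by simp
    fix c e assume c: "(\<Sum>v\<in>\<phi> ` I. fscale (c v) v) = 0" and e: "e \<in> \<phi> ` I"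
    have "(\<Sum>p\<in>I. fscale (c (\<phi> p)) (\<phi> p)) = 0" using c by (simp add: sum.reindex[OF inj])
    then have "\<forall>p\<in>I. c (\<phi> p) = 0" using assms(2)[rule_format, of "\<lambda>p. c (\<phi> p)"] by blast
    then show "c e = 0" using e by blast
  qed
qed

lemma dim_lower:
  assumes "B \<subseteq> E" "fv.independent B" "E \<subseteq> fv.span W" "finite W"
  shows "card B \<le> fv.dim E"
proof -
  obtain A where A: "A \<subseteq> E" "fv.independent A" "E \<subseteq> fv.span A" "card A = fv.dim E"
    by (rule fv.basis_exists)
  have "A \<subseteq> fv.span W" using A(1) assms(3) by blast
  then have "finite A" using fv.independent_span_bound[OF assms(4) A(2)] by blast
  moreover have "B \<subseteq> fv.span A" using assms(1) A(3) by blast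
  ultimately have "card B \<le> card A" using fv.independent_span_bound[OF _ assms(2)] by blast
  then show ?thesis using A(4) by simp
qed

lemma rel_split:
  assumes "m \<notin> K" "finite K"
  shows "(\<Sum>p\<in>insert (m, b0) (K \<times> UNIV). w p * Gf n (u (fst p)) (v (fst p)) (sel (snd p)) x)
    = (\<Sum>k\<in>K. Re (cw w k * hz (u k) (v k) x ^ n)) + Re (complex_of_real (w (m, b0)) * sel b0 * hz (u m) (v m) x ^ n)"
proof -
  have "(m, b0) \<notin> K \<times> UNIV" using assms by auto
  then have "(\<Sum>p\<in>insert (m, b0) (K \<times> UNIV). w p * Gf n (u (fst p)) (v (fst p)) (sel (snd p)) x)
     = w (m, b0) * Gf n (u m) (v m) (sel b0) x + (\<Sum>p\<in>K \<times> UNIV. w p * Gf n (u (fst p)) (v (fst p)) (sel (snd p)) x)"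
    using assms(2) by (subst sum.insert) auto
  also have "\<dots> = w (m, b0) * Gf n (u m) (v m) (sel b0) x + (\<Sum>k\<in>K. Re (cw w k * hz (u k) (v k) x ^ n))"
    by (simp only: sum_KU)
  also have "w (m, b0) * Gf n (u m) (v m) (sel b0) x = Re (complex_of_real (w (m, b0)) * sel b0 * hz (u m) (v m) x ^ n)"
    by (simp add: Gf_def mult.assoc)
  finally show ?thesis by simp
qed

theorem proposition3:
  fixes n r :: nat and \<omega> :: "nat \<Rightarrow> real^3"
  assumes "r \<ge> 1"
    and "\<forall>k\<in>{1..r}. norm (\<omega> k) = 1"
    and "\<forall>i\<in>{1..r}. \<forall>j\<in>{1..r}. i \<noteq> j \<longrightarrow> \<omega> i \<noteq> \<omega> j \<and> \<omega> i \<noteq> - \<omega> j"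
  shows "fdim (fspan (\<Union>k\<in>{1..r}. harmonic_axial n (\<omega> k)))
           = (if r \<le> n then 2 * r else 2 * n + 1)"
proof -
  have ex: "\<forall>k\<in>{1..r}. \<exists>uv. frm (\<omega> k) (fst uv) (snd uv)"
  proof
    fix k assume k: "k \<in> {1..r}"
    obtain u0 v0 where uv: "norm u0 = 1 \<and> norm v0 = 1 \<and> u0 \<bullet> v0 = 0 \<and> u0 \<bullet> \<omega> k = 0 \<and> v0 \<bullet> \<omega> k = 0 \<and>
           (\<forall>x. x = (x \<bullet> u0) *\<^sub>R u0 + (x \<bullet> v0) *\<^sub>R v0 + (x \<bullet> \<omega> k) *\<^sub>R \<omega> k)"
      using frame_exists[OF assms(2)[rule_format, OF k]] by blast
    show "\<exists>uv. frm (\<omega> k) (fst uv) (snd uv)"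
      by (rule exI[of _ "(u0, v0)"]) (use uv assms(2) k in \<open>simp add: frm_def\<close>)
  qed
  obtain UV where UV: "\<forall>k\<in>{1..r}. frm (\<omega> k) (fst (UV k)) (snd (UV k))"
    using bchoice[OF ex] by blast
  define u where "u k = fst (UV k)" for k
  define v where "v k = snd (UV k)" for k
  have fr: "\<forall>k\<in>{1..r}. frm (\<omega> k) (u k) (v k)" using UV u_def v_def by simp
  have good_sub: "good \<omega> u v K" if "K \<subseteq> {1..r}" for K
  proof -
    have A: "\<forall>k\<in>K. frm (\<omega> k) (u k) (v k)" using fr that by blast
    have B: "\<forall>j\<in>K. \<forall>k\<in>K. j \<noteq> k \<longrightarrow> \<omega> k \<noteq> \<omega> j \<and> \<omega> k \<noteq> - \<omega> j"
    proof (intro ballI impI)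
      fix j k assume jk: "j \<in> K" "k \<in> K" "j \<noteq> k"
      then have "k \<in> {1..r}" "j \<in> {1..r}" "k \<noteq> j" using that by auto
      then show "\<omega> k \<noteq> \<omega> j \<and> \<omega> k \<noteq> - \<omega> j" using assms(3) by blast
    qed
    show ?thesis unfolding good_def using A B by blast
  qed
  define I where "I = {1..r} \<times> (UNIV :: bool set)"
  define \<phi> where "\<phi> p = Gf n (u (fst p)) (v (fst p)) (sel (snd p))" for p
  define S where "S = (\<Union>k\<in>{1..r}. harmonic_axial n (\<omega> k))"
  define E where "E = \<phi> ` I"
  have finI: "finite I" unfolding I_def by simp
  have cardI: "card I = 2 * r" unfolding I_def by (simp add: card_cartesian_product)
  have ES: "E \<subseteq> S"
  proof
    fix f assume "f \<in> E"
    then obtain k b where kb: "k \<in> {1..r}" "f = \<phi> (k, b)" unfolding E_def I_def by auto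
    then have "f \<in> harmonic_axial n (\<omega> k)" unfolding \<phi>_def using Gf_in fr by simp
    then show "f \<in> S" unfolding S_def using kb(1) by blast
  qed
  have SE: "S \<subseteq> fv.span E"
  proof
    fix f assume "f \<in> S"
    then obtain k where k: "k \<in> {1..r}" "f \<in> harmonic_axial n (\<omega> k)" unfolding S_def by blast
    have "{Gf n (u k) (v k) 1, Gf n (u k) (v k) (- \<i>)} \<subseteq> E"
    proof -
      have "Gf n (u k) (v k) 1 = \<phi> (k, True)" "Gf n (u k) (v k) (- \<i>) = \<phi> (k, False)"
        by (simp_all add: \<phi>_def sel_def)
      moreover have "(k, True) \<in> I" "(k, False) \<in> I" using k(1) by (auto simp: I_def)
      ultimately show ?thesis unfolding E_def by auto
    qed
    then have "fv.span {Gf n (u k) (v k) 1, Gf n (u k) (v k) (- \<i>)} \<subseteq> fv.span E" by (rule fv.span_mono)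
    then show "f \<in> fv.span E" using span_axial[OF _ k(2)] fr k(1) by blast
  qed
  have spanEq: "fv.span S = fv.span E"
  proof
    show "fv.span S \<subseteq> fv.span E" using fv.span_mono[OF SE] by (simp add: fv.span_span)
    show "fv.span E \<subseteq> fv.span S" using fv.span_mono[OF ES] .
  qed
  have dimEq: "fdim (fspan S) = fv.dim E"
    unfolding fdim_def fspan_def using fv.span_eq_dim[OF spanEq] by simp
  define W where "W = Fb n ` Bset n"
  have finB: "finite (Bset n)" using finite_degs unfolding Bset_def by simp
  have finW: "finite W" unfolding W_def using finB by simp
  have EW: "E \<subseteq> fv.span W"
  proof
    fix f assume "f \<in> E"
    then have "f \<in> S" using ES by blast
    then have "f \<in> harmonic_hom n" unfolding S_def harmonic_axial_def by blast
    then show "f \<in> fv.span W" unfolding W_def by (rule harmonic_span)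
  qed
  have up1: "fv.dim E \<le> 2 * n + 1"
  proof -
    have "fv.dim E \<le> card W" by (rule fv.dim_le_card[OF EW finW])
    also have "\<dots> \<le> card (Bset n)" unfolding W_def by (rule card_image_le[OF finB])
    also have "\<dots> \<le> 2 * n + 1" by (rule card_Bset)
    finally show ?thesis .
  qed
  have up2: "fv.dim E \<le> 2 * r"
  proof -
    have "fv.dim E \<le> card E" using finI unfolding E_def by (intro fv.dim_le_card') simp
    also have "\<dots> \<le> card I" unfolding E_def by (rule card_image_le[OF finI])
    finally show ?thesis using cardI by simp
  qed
  have rel: "(\<Sum>p\<in>J. fscale (w p) (\<phi> p)) = 0 \<Longrightarrow> \<forall>x. (\<Sum>p\<in>J. w p * Gf n (u (fst p)) (v (fst p)) (sel (snd p)) x) = 0"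
    for J w
  proof
    fix x assume h: "(\<Sum>p\<in>J. fscale (w p) (\<phi> p)) = 0"
    have "(\<Sum>p\<in>J. fscale (w p) (\<phi> p)) x = 0" using h by simp
    then show "(\<Sum>p\<in>J. w p * Gf n (u (fst p)) (v (fst p)) (sel (snd p)) x) = 0"
      by (simp add: fscale_sum_apply \<phi>_def)
  qed
  show ?thesis
  proof (cases "r \<le> n")
    case True
    have cond: "\<forall>w. (\<Sum>p\<in>I. fscale (w p) (\<phi> p)) = 0 \<longrightarrow> (\<forall>p\<in>I. w p = 0)"
    proof (intro allI impI)
      fix w assume h: "(\<Sum>p\<in>I. fscale (w p) (\<phi> p)) = 0"
      have "\<forall>x. (\<Sum>p\<in>I. w p * Gf n (u (fst p)) (v (fst p)) (sel (snd p)) x) = 0"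
        by (rule rel[OF h])
      then have "\<forall>x. (\<Sum>k\<in>{1..r}. Re (cw w k * hz (u k) (v k) x ^ n)) = 0"
        unfolding I_def sum_KU .
      moreover have c: "card {1..r} \<le> n" using True by simp
      ultimately have cz: "\<forall>k\<in>{1..r}. cw w k = 0"
        using indep_small[OF finite_atLeastAtMost good_sub[OF order_refl] c] by blast
      show "\<forall>p\<in>I. w p = 0"
      proof
        fix p assume "p \<in> I"
        then obtain k b where kb: "p = (k, b)" "k \<in> {1..r}" unfolding I_def by auto
        then have "w (k, True) = 0 \<and> w (k, False) = 0" using cz cw_zero by blast
        then show "w p = 0" using kb by (cases b) auto
      qed
    qed
    have "fv.dim E = card E"
      unfolding E_def by (rule fv.dim_eq_card_independent[OF fam_indep(2)[OF finI cond]])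
    also have "\<dots> = 2 * r" unfolding E_def using card_image[OF fam_indep(1)[OF finI cond]] cardI by simp
    finally show ?thesis using dimEq True S_def by simp
  next
    case False
    define K where "K = {1..n}"
    define m where "m = n + 1"
    have mK: "m \<notin> K" "finite K" "card K = n" unfolding K_def m_def by auto
    have gK: "good \<omega> u v (insert m K)" "good \<omega> u v K"
      using False by (auto intro!: good_sub simp: K_def m_def)
    define J where "J b = insert (m, b) (K \<times> (UNIV :: bool set))" for b
    have JI: "J b \<subseteq> I" for b unfolding J_def I_def K_def m_def using False by auto
    have finJ: "finite (J b)" for b unfolding J_def K_def by simp
    have cardJ: "card (J b) = 2 * n + 1" for b
      unfolding J_def using mK by (simp add: card_cartesian_product)
    have small0: "\<forall>p\<in>J b. w p = 0"
      if h: "\<forall>x. (\<Sum>p\<in>J b. w p * Gf n (u (fst p)) (v (fst p)) (sel (snd p)) x) = 0"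
        and w0: "w (m, b) = 0" for b w
    proof -
      have "\<forall>x. (\<Sum>k\<in>K. Re (cw w k * hz (u k) (v k) x ^ n)) = 0"
        using h unfolding J_def rel_split[OF mK(1,2)] using w0 by simp
      moreover have cK: "card K \<le> n" using mK(3) by simp
      ultimately have cz: "\<forall>k\<in>K. cw w k = 0" using indep_small[OF mK(2) gK(2) cK] by blast
      show ?thesis
      proof
        fix p assume "p \<in> J b"
        then consider "p = (m, b)" | k b' where "p = (k, b')" "k \<in> K" unfolding J_def by auto
        then show "w p = 0"
        proof cases
          case 1 then show ?thesis using w0 by simp
        next
          case 2
          then have "w (k, True) = 0 \<and> w (k, False) = 0" using cz cw_zero by blast
          then show ?thesis using 2 by (cases b') auto
        qed
      qed
    qed
    have "\<exists>b. \<forall>w. (\<Sum>p\<in>J b. fscale (w p) (\<phi> p)) = 0 \<longrightarrow> (\<forall>p\<in>J b. w p = 0)"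
    proof (rule ccontr)
      assume "\<not> ?thesis"
      then obtain w1 w2 where
        w1: "(\<Sum>p\<in>J True. fscale (w1 p) (\<phi> p)) = 0" "\<exists>p\<in>J True. w1 p \<noteq> 0" and
        w2: "(\<Sum>p\<in>J False. fscale (w2 p) (\<phi> p)) = 0" "\<exists>p\<in>J False. w2 p \<noteq> 0"
        by blast
      have r1: "\<forall>x. (\<Sum>p\<in>J True. w1 p * Gf n (u (fst p)) (v (fst p)) (sel (snd p)) x) = 0" using rel[OF w1(1)] .
      have r2: "\<forall>x. (\<Sum>p\<in>J False. w2 p * Gf n (u (fst p)) (v (fst p)) (sel (snd p)) x) = 0" using rel[OF w2(1)] .
      have a0: "w1 (m, True) \<noteq> 0" using small0[OF r1] w1(2) by blast
      have b0: "w2 (m, False) \<noteq> 0" using small0[OF r2] w2(2) by blast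
      show False
      proof (rule indep_extra[OF mK(2,1) gK(1) mK(3) a0 b0])
        show "\<forall>x. (\<Sum>k\<in>K. Re (cw w1 k * hz (u k) (v k) x ^ n)) + Re (complex_of_real (w1 (m, True)) * hz (u m) (v m) x ^ n) = 0"
          using r1 unfolding J_def rel_split[OF mK(1,2)] by (simp add: sel_def)
        show "\<forall>x. (\<Sum>k\<in>K. Re (cw w2 k * hz (u k) (v k) x ^ n)) + Re (- \<i> * complex_of_real (w2 (m, False)) * hz (u m) (v m) x ^ n) = 0"
          using r2 unfolding J_def rel_split[OF mK(1,2)] by (simp add: sel_def algebra_simps)
      qed
    qed
    then obtain b where cond: "\<forall>w. (\<Sum>p\<in>J b. fscale (w p) (\<phi> p)) = 0 \<longrightarrow> (\<forall>p\<in>J b. w p = 0)" by blast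
    have "card (\<phi> ` J b) = 2 * n + 1" using card_image[OF fam_indep(1)[OF finJ cond]] cardJ by simp
    moreover have "card (\<phi> ` J b) \<le> fv.dim E"
      by (rule dim_lower[OF _ fam_indep(2)[OF finJ cond] EW finW]) (use JI in \<open>auto simp: E_def\<close>)
    ultimately have "fv.dim E = 2 * n + 1" using up1 by simp
    then show ?thesis using dimEq False S_def by simp
  qed
qed

end
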